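(* Let $\mathcal C$ be a Clifford circuit with linear outcome code $\mathcal O(\mathcal C)$. For every $u\in\mathcal O(\mathcal C)^\perp$, $\overleftarrow{F(u)}=\overrightarrow{F'(u)}$, where $F'(u)=\prod_{j=1}^m\eta_{\ell_j+0.5}(S_j^{u_j})$.
   Context: A Clifford circuit on $n$ qubits is a finite sequence of operations, each a unitary Clifford gate or the measurement of a Hermitian $n$-qubit Pauli, each with a level in $\{1,2,\dots\}$; operations of equal level have disjoint supports and levels are nondecreasing; depth $\Delta$ = maximal level. In circuit order the $j$-th measurement measures $S_j$ at level $\ell_j$ ($j=1,\dots,m$); outcome $o_j=0$ for eigenvalue $+1$, $1$ for $-1$. The outcome code $\mathcal O(\mathcal C)\subseteq\mathbb Z_2^m$ is the set of outcome bit-strings occurring with nonzero probability for some input state; $\perp$ refers to $(u|v)=\sum u_iv_i\bmod2$. $\overline{\mathcal P}_N$ is the $N$-qubit Pauli group modulo phases. $U_\ell$ is the product of unitary gates of level $\ell$ (identity if none). Fault operators $F\in\overline{\mathcal P}_{n(\Delta+1)}$ act on qubits $(\ell+0.5,q)$, $0\le\ell\le\Delta$, $1\le q\le n$, with level components $F_{\ell+0.5}$; $\eta_{\ell+0.5}(P)$ is $P$ at level $\ell+0.5$ and $I$ elsewhere. Cumulant $\overrightarrow F$: start with $F$; for $\ell=1,\dots,\Delta$ replace $\overrightarrow F_{\ell+0.5}$ by $\overrightarrow F_{\ell+0.5}\cdot U_\ell\overrightarrow F_{\ell-0.5}U_\ell^{-1}$. Back-cumulant $\overleftarrow F$: start with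 $F$; for $\ell=\Delta,\dots,1$ replace $\overleftarrow F_{\ell-0.5}$ by $\overleftarrow F_{\ell-0.5}\cdot U_\ell^{-1}\overleftarrow F_{\ell+0.5}U_\ell$. $F(u)=\prod_j\eta_{\ell_j-0.5}(S_j^{u_j})$. *)

theory Defs
  imports "Jordan_Normal_Form.Schur_Decomposition"
begin

text \<open>The n-qubit Hilbert space is C^(2^n); computational basis vector with index a < 2^n
  has qubit q (q < n) in state given by bit q of a.  Operators are complex (2^n) x (2^n) matrices.\<close>

abbreviation dimq :: "nat \<Rightarrow> nat" where "dimq n \<equiv> 2 ^ n"

text \<open>The Pauli operator X^x Z^z (x, z : qubit sets given as predicates):
  X^x Z^z |b> = (-1)^(z.b) |b xor x>.\<close>
definition pauli :: "nat \<Rightarrow> (nat \<Rightarrow> bool) \<Rightarrow> (nat \<Rightarrow> bool) \<Rightarrow> complex mat" where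
  "pauli n x z = mat (dimq n) (dimq n) (\<lambda>(a, b).
     if (\<forall>q<n. (bit a q \<noteq> bit b q) = x q)
     then (- 1) ^ card {q. q < n \<and> z q \<and> bit b q} else 0)"

definition is_pauli :: "nat \<Rightarrow> complex mat \<Rightarrow> bool" where
  "is_pauli n P \<longleftrightarrow> (\<exists>k::nat. \<exists>x z. P = (\<i> ^ k) \<cdot>\<^sub>m pauli n x z)"

definition is_hermitian_pauli :: "nat \<Rightarrow> complex mat \<Rightarrow> bool" where
  "is_hermitian_pauli n P \<longleftrightarrow> is_pauli n P \<and> mat_adjoint P = P"

definition eq_mod_phase :: "complex mat \<Rightarrow> complex mat \<Rightarrow> bool" where
  "eq_mod_phase A B \<longleftrightarrow> (\<exists>k::nat. A = (\<i> ^ k) \<cdot>\<^sub>m B)"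

definition is_unitary :: "nat \<Rightarrow> complex mat \<Rightarrow> bool" where
  "is_unitary n U \<longleftrightarrow> U \<in> carrier_mat (dimq n) (dimq n) \<and> U * mat_adjoint U = 1\<^sub>m (dimq n)
     \<and> mat_adjoint U * U = 1\<^sub>m (dimq n)"

definition is_clifford :: "nat \<Rightarrow> complex mat \<Rightarrow> bool" where
  "is_clifford n U \<longleftrightarrow> is_unitary n U \<and>
     (\<forall>P. is_pauli n P \<longrightarrow> is_pauli n (U * P * mat_adjoint U))"

text \<open>An operator acts trivially outside the qubit set Q: it commutes with every Pauli
  supported outside Q (equivalently, it is of the form V (x) I on Q and its complement).\<close>
definition acts_within :: "nat \<Rightarrow> nat set \<Rightarrow> complex mat \<Rightarrow> bool" where
  "acts_within n Q U \<longleftrightarrow> (\<forall>x z. (\<forall>q\<in>Q. \<not> x q \<and> \<not> z q) \<longrightarrow> U * pauli n x z = pauli n x z * U)"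

definition pauli_support :: "nat \<Rightarrow> complex mat \<Rightarrow> nat set" where
  "pauli_support n P = {q. q < n \<and> (\<exists>k::nat. \<exists>x z. P = (\<i> ^ k) \<cdot>\<^sub>m pauli n x z \<and> (x q \<or> z q))}"

datatype operation = Gate "nat set" "complex mat" | Meas "complex mat"

type_synonym circuit = "(operation \<times> nat) list"

fun op_support :: "nat \<Rightarrow> operation \<Rightarrow> nat set" where
  "op_support n (Gate Q U) = Q"
| "op_support n (Meas S) = pauli_support n S"

fun op_wf :: "nat \<Rightarrow> operation \<Rightarrow> bool" where
  "op_wf n (Gate Q U) \<longleftrightarrow> Q \<subseteq> {..<n} \<and> is_clifford n U \<and> acts_within n Q U"
| "op_wf n (Meas S) \<longleftrightarrow> is_hermitian_pauli n S"

definition clifford_circuit :: "nat \<Rightarrow> circuit \<Rightarrow> bool" where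
  "clifford_circuit n C \<longleftrightarrow>
     (\<forall>(op, l) \<in> set C. op_wf n op \<and> 1 \<le> l) \<and>
     sorted (map snd C) \<and>
     (\<forall>i<length C. \<forall>j<length C. i \<noteq> j \<longrightarrow> snd (C ! i) = snd (C ! j) \<longrightarrow>
        op_support n (fst (C ! i)) \<inter> op_support n (fst (C ! j)) = {})"

definition depth :: "circuit \<Rightarrow> nat" where
  "depth C = Max (insert 0 (set (map snd C)))"

fun meas_list :: "circuit \<Rightarrow> (complex mat \<times> nat) list" where
  "meas_list [] = []"
| "meas_list ((Gate Q U, l) # C) = meas_list C"
| "meas_list ((Meas S, l) # C) = (S, l) # meas_list C"

definition num_meas :: "circuit \<Rightarrow> nat" where
  "num_meas C = length (meas_list C)"

definition meas_proj :: "nat \<Rightarrow> complex mat \<Rightarrow> bool \<Rightarrow> complex mat" where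
  "meas_proj n S b = (1 / 2 :: complex) \<cdot>\<^sub>m (1\<^sub>m (dimq n) + (if b then - S else S))"

fun run :: "nat \<Rightarrow> circuit \<Rightarrow> bool list \<Rightarrow> complex vec \<Rightarrow> complex vec" where
  "run n [] os v = v"
| "run n ((Gate Q U, l) # C) os v = run n C os (U *\<^sub>v v)"
| "run n ((Meas S, l) # C) [] v = run n C [] (meas_proj n S False *\<^sub>v v)"
| "run n ((Meas S, l) # C) (b # os) v = run n C os (meas_proj n S b *\<^sub>v v)"

text \<open>Outcome code: outcome bit-strings (o_j = True meaning eigenvalue -1) of length m
  that occur with nonzero probability for some (normalised pure) input state.\<close>
definition outcome_code :: "nat \<Rightarrow> circuit \<Rightarrow> bool list set" where
  "outcome_code n C = {os. length os = num_meas C \<and>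
     (\<exists>\<psi> \<in> carrier_vec (dimq n). \<psi> \<bullet>c \<psi> = 1 \<and> run n C os \<psi> \<bullet>c run n C os \<psi> \<noteq> 0)}"

definition bxor :: "bool list \<Rightarrow> bool list \<Rightarrow> bool list" where
  "bxor xs ys = map2 (\<noteq>) xs ys"

definition bdot :: "bool list \<Rightarrow> bool list \<Rightarrow> bool" where
  "bdot u v = odd (card {j. j < length u \<and> j < length v \<and> u ! j \<and> v ! j})"

definition linear_code :: "nat \<Rightarrow> bool list set \<Rightarrow> bool" where
  "linear_code m Cd \<longleftrightarrow> Cd \<subseteq> {xs. length xs = m} \<and> replicate m False \<in> Cd \<and>
     (\<forall>a\<in>Cd. \<forall>b\<in>Cd. bxor a b \<in> Cd)"

definition dual_code :: "nat \<Rightarrow> bool list set \<Rightarrow> bool list set" where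
  "dual_code m Cd = {u. length u = m \<and> (\<forall>v\<in>Cd. \<not> bdot u v)}"

text \<open>A fault operator is a function F :: nat => complex mat; F l is the n-qubit Pauli at
  level l + 0.5 (l = 0..depth), each component taken modulo phase.\<close>

definition mprod :: "nat \<Rightarrow> complex mat list \<Rightarrow> complex mat" where
  "mprod n As = foldr (*) As (1\<^sub>m (dimq n))"

fun level_unitary :: "nat \<Rightarrow> circuit \<Rightarrow> nat \<Rightarrow> complex mat" where
  "level_unitary n [] l = 1\<^sub>m (dimq n)"
| "level_unitary n ((Gate Q U, l') # C) l =
     (if l' = l then level_unitary n C l * U else level_unitary n C l)"
| "level_unitary n ((Meas S, l') # C) l = level_unitary n C l"

fun cumulant :: "nat \<Rightarrow> circuit \<Rightarrow> (nat \<Rightarrow> complex mat) \<Rightarrow> nat \<Rightarrow> complex mat" where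
  "cumulant n C F 0 = F 0"
| "cumulant n C F (Suc l) =
     F (Suc l) * (level_unitary n C (Suc l) * cumulant n C F l * mat_adjoint (level_unitary n C (Suc l)))"

function back_cumulant :: "nat \<Rightarrow> circuit \<Rightarrow> (nat \<Rightarrow> complex mat) \<Rightarrow> nat \<Rightarrow> complex mat" where
  "back_cumulant n C F l =
     (if depth C \<le> l then F l
      else F l * (mat_adjoint (level_unitary n C (Suc l)) * back_cumulant n C F (Suc l)
                  * level_unitary n C (Suc l)))"
  by pat_completeness auto
termination by (relation "measure (\<lambda>(n, C, F, l). depth C - l)") auto

text \<open>F(u) = prod_j eta_{l_j - 0.5}(S_j^{u_j}): component l collects j with l_j - 0.5 = l + 0.5.\<close>
definition fault_before :: "nat \<Rightarrow> circuit \<Rightarrow> bool list \<Rightarrow> nat \<Rightarrow> complex mat" where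
  "fault_before n C u l = (let M = meas_list C in
     mprod n [if u ! j then fst (M ! j) else 1\<^sub>m (dimq n). j \<leftarrow> [0..<length M], snd (M ! j) = Suc l])"

text \<open>F'(u) = prod_j eta_{l_j + 0.5}(S_j^{u_j}): component l collects j with l_j = l.\<close>
definition fault_after :: "nat \<Rightarrow> circuit \<Rightarrow> bool list \<Rightarrow> nat \<Rightarrow> complex mat" where
  "fault_after n C u l = (let M = meas_list C in
     mprod n [if u ! j then fst (M ! j) else 1\<^sub>m (dimq n). j \<leftarrow> [0..<length M], snd (M ! j) = l])"

end

theory Submission
  imports Defs
begin

definition sgnc :: "nat \<Rightarrow> (nat \<Rightarrow> bool) \<Rightarrow> complex" where
  "sgnc n P = (-1) ^ card {q. q < n \<and> P q}"

lemma sgnc_prod: "sgnc n P = (\<Prod>q<n. if P q then -1 else 1)"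
proof -
  have "(\<Prod>q<n. if P q then -1 else (1::complex)) =
     (\<Prod>q\<in>{..<n} \<inter> {q. P q}. -1) * (\<Prod>q\<in>{..<n} \<inter> - {q. P q}. 1)"
    by (rule prod.If_cases) simp
  also have "\<dots> = (-1) ^ card ({..<n} \<inter> {q. P q})" by simp
  also have "{..<n} \<inter> {q. P q} = {q. q < n \<and> P q}" by auto
  finally show ?thesis unfolding sgnc_def by simp
qed

lemma sgnc_sq: "sgnc n P * sgnc n P = 1"
  unfolding sgnc_def by (simp add: power_mult_distrib[symmetric])

lemma sgnc_cong: "(\<And>q. q < n \<Longrightarrow> P q = P' q) \<Longrightarrow> sgnc n P = sgnc n P'"
  unfolding sgnc_def by (metis (mono_tags, lifting) Collect_cong)

lemma pauli_carrier[simp]: "pauli n x z \<in> carrier_mat (dimq n) (dimq n)"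
  unfolding pauli_def by simp

lemma pauli_dims[simp]: "dim_row (pauli n x z) = dimq n" "dim_col (pauli n x z) = dimq n"
  unfolding pauli_def by simp_all

lemma pauli_index: "a < dimq n \<Longrightarrow> b < dimq n \<Longrightarrow> pauli n x z $$ (a, b) =
  (if \<forall>q<n. (bit a q \<noteq> bit b q) = x q then sgnc n (\<lambda>q. z q \<and> bit b q) else 0)"
  unfolding pauli_def sgnc_def by simp

lemma bits_eq:
  fixes a b :: nat
  assumes "a < dimq n" "b < dimq n" "\<forall>q<n. bit a q = bit b q"
  shows "a = b"
proof (rule bit_eqI)
  fix q
  show "bit a q = bit b q"
  proof (cases "q < n")
    case True then show ?thesis using assms by simp
  next
    case False
    have "\<not> bit a q"
      by (metis False assms(1) bit_take_bit_iff take_bit_nat_eq_self)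
    moreover have "\<not> bit b q"
      by (metis False assms(2) bit_take_bit_iff take_bit_nat_eq_self)
    ultimately show ?thesis by simp
  qed
qed

definition mkbits :: "nat \<Rightarrow> (nat \<Rightarrow> bool) \<Rightarrow> nat" where
  "mkbits n P = horner_sum of_bool 2 (map P [0..<n])"

lemma mkbits_less: "mkbits n P < dimq n"
  unfolding mkbits_def using horner_sum_bound[of "map P [0..<n]"] by simp

lemma bit_mkbits: "q < n \<Longrightarrow> bit (mkbits n P) q = P q"
  unfolding mkbits_def by (simp add: bit_horner_sum_bit_iff possible_bit_def)

lemma sum_single:
  fixes f :: "nat \<Rightarrow> complex"
  assumes "b0 \<in> A" "finite A" "\<And>b. b \<in> A \<Longrightarrow> b \<noteq> b0 \<Longrightarrow> f b = 0"
  shows "sum f A = f b0"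
proof -
  have "sum f A = f b0 + sum f (A - {b0})" using assms by (simp add: sum.remove)
  also have "sum f (A - {b0}) = 0" using assms by (intro sum.neutral) auto
  finally show ?thesis by simp
qed

lemma pauli_mult:
  "pauli n x z * pauli n x' z' =
   sgnc n (\<lambda>q. z q \<and> x' q) \<cdot>\<^sub>m pauli n (\<lambda>q. x q \<noteq> x' q) (\<lambda>q. z q \<noteq> z' q)"
proof (rule eq_matI)
  fix a c assume a: "a < dim_row (sgnc n (\<lambda>q. z q \<and> x' q) \<cdot>\<^sub>m pauli n (\<lambda>q. x q \<noteq> x' q) (\<lambda>q. z q \<noteq> z' q))"
    and c: "c < dim_col (sgnc n (\<lambda>q. z q \<and> x' q) \<cdot>\<^sub>m pauli n (\<lambda>q. x q \<noteq> x' q) (\<lambda>q. z q \<noteq> z' q))"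
  then have a: "a < dimq n" and c: "c < dimq n" by simp_all
  define b0 where "b0 = mkbits n (\<lambda>q. bit c q \<noteq> x' q)"
  have b0: "b0 < dimq n" unfolding b0_def by (rule mkbits_less)
  have bb0: "\<And>q. q < n \<Longrightarrow> bit b0 q = (bit c q \<noteq> x' q)" unfolding b0_def by (rule bit_mkbits)
  have "(pauli n x z * pauli n x' z') $$ (a, c) =
     (\<Sum>b = 0..<dimq n. pauli n x z $$ (a, b) * pauli n x' z' $$ (b, c))"
    using a c by (simp add: index_mult_mat scalar_prod_def)
  also have "\<dots> = pauli n x z $$ (a, b0) * pauli n x' z' $$ (b0, c)"
  proof (rule sum_single)
    show "b0 \<in> {0..<dimq n}" using b0 by simp
    fix b assume b: "b \<in> {0..<dimq n}" "b \<noteq> b0"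
    have "\<not> (\<forall>q<n. (bit b q \<noteq> bit c q) = x' q)"
    proof
      assume h: "\<forall>q<n. (bit b q \<noteq> bit c q) = x' q"
      have "b = b0" using b b0 by (intro bits_eq) (use h bb0 in auto)
      then show False using b by simp
    qed
    then have "pauli n x' z' $$ (b, c) = 0"
      using b c by (subst pauli_index) auto
    then show "pauli n x z $$ (a, b) * pauli n x' z' $$ (b, c) = 0"
      by simp
  qed simp
  also have "\<dots> = sgnc n (\<lambda>q. z q \<and> x' q) *
      pauli n (\<lambda>q. x q \<noteq> x' q) (\<lambda>q. z q \<noteq> z' q) $$ (a, c)"
  proof -
    have c1: "(\<forall>q<n. (bit b0 q \<noteq> bit c q) = x' q)" using bb0 by auto
    have c2: "(\<forall>q<n. (bit a q \<noteq> bit b0 q) = x q) = (\<forall>q<n. (bit a q \<noteq> bit c q) = (x q \<noteq> x' q))"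
      using bb0 by auto
    have s: "sgnc n (\<lambda>q. z q \<and> bit b0 q) * sgnc n (\<lambda>q. z' q \<and> bit c q) =
       sgnc n (\<lambda>q. z q \<and> x' q) * sgnc n (\<lambda>q. (z q \<noteq> z' q) \<and> bit c q)"
    proof -
      have "sgnc n (\<lambda>q. z q \<and> bit b0 q) = sgnc n (\<lambda>q. z q \<and> (bit c q \<noteq> x' q))"
        using bb0 by (intro sgnc_cong) auto
      moreover have "sgnc n (\<lambda>q. z q \<and> (bit c q \<noteq> x' q)) * sgnc n (\<lambda>q. z' q \<and> bit c q) =
       sgnc n (\<lambda>q. z q \<and> x' q) * sgnc n (\<lambda>q. (z q \<noteq> z' q) \<and> bit c q)"
        unfolding sgnc_prod prod.distrib[symmetric]
        by (intro prod.cong) auto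
      ultimately show ?thesis by simp
    qed
    show ?thesis
    proof (cases "\<forall>q<n. (bit a q \<noteq> bit c q) = (x q \<noteq> x' q)")
      case True
      then have "\<forall>q<n. (bit a q \<noteq> bit b0 q) = x q" using c2 by blast
      then show ?thesis using a b0 c c1 True s by (simp add: pauli_index)
    next
      case False
      then have "\<not> (\<forall>q<n. (bit a q \<noteq> bit b0 q) = x q)" using c2 by blast
      then have "pauli n x z $$ (a, b0) = 0" using a b0 by (subst pauli_index) auto
      moreover have "pauli n (\<lambda>q. x q \<noteq> x' q) (\<lambda>q. z q \<noteq> z' q) $$ (a, c) = 0"
        using a c False by (subst pauli_index) auto
      ultimately show ?thesis by simp
    qed
  qed
  finally show "(pauli n x z * pauli n x' z') $$ (a, c) =
    (sgnc n (\<lambda>q. z q \<and> x' q) \<cdot>\<^sub>m pauli n (\<lambda>q. x q \<noteq> x' q) (\<lambda>q. z q \<noteq> z' q)) $$ (a, c)"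
    using a c by simp
qed simp_all


abbreviation sqm :: "nat \<Rightarrow> complex mat \<Rightarrow> bool" where
  "sqm n A \<equiv> A \<in> carrier_mat (dimq n) (dimq n)"

lemma pauli_restrict: "pauli n x z = pauli n (\<lambda>q. q < n \<and> x q) (\<lambda>q. q < n \<and> z q)"
  unfolding pauli_def by (intro cong_mat refl) (auto intro!: arg_cong[where f="\<lambda>A. (-1::complex) ^ card A"])

lemma pauli_id: "pauli n (\<lambda>_. False) (\<lambda>_. False) = 1\<^sub>m (dimq n)"
proof (rule eq_matI)
  fix a b assume "a < dim_row (1\<^sub>m (dimq n))" "b < dim_col (1\<^sub>m (dimq n))"
  then have a: "a < dimq n" and b: "b < dimq n" by simp_all
  have "(\<forall>q<n. bit a q = bit b q) = (a = b)" using bits_eq[OF a b] by auto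
  then show "pauli n (\<lambda>_. False) (\<lambda>_. False) $$ (a, b) = 1\<^sub>m (dimq n) $$ (a, b)"
    using a b by (simp add: pauli_index sgnc_def)
qed simp_all

lemma sgnc_i: "sgnc n P = \<i> ^ (2 * card {q. q < n \<and> P q})"
  unfolding sgnc_def by (simp add: power_mult)

lemma i4: "\<i> ^ 4 = (1::complex)"
proof -
  have "\<i> ^ 4 = (\<i> ^ 2) ^ 2" by (simp flip: power_mult)
  then show ?thesis by simp
qed

lemma i_pow_mod: "\<i> ^ k = \<i> ^ (k mod 4)"
proof -
  have e: "4 * (k div 4) + k mod 4 = k" by simp
  have "\<i> ^ k = \<i> ^ (4 * (k div 4) + k mod 4)" by (simp only: e)
  also have "\<dots> = (\<i> ^ 4) ^ (k div 4) * \<i> ^ (k mod 4)" by (simp only: power_add power_mult)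
  also have "\<dots> = \<i> ^ (k mod 4)" by (simp only: i4 power_one mult_1)
  finally show ?thesis .
qed

lemma smult_smult_mat: "a \<cdot>\<^sub>m (b \<cdot>\<^sub>m A) = (a * b :: complex) \<cdot>\<^sub>m A"
  by (rule eq_matI) auto

lemma one_smult_mat': "(1::complex) \<cdot>\<^sub>m A = A"
  by (rule eq_matI) auto

lemma smult_mult_smult: "A \<in> carrier_mat N N \<Longrightarrow> B \<in> carrier_mat N N \<Longrightarrow>
  (a \<cdot>\<^sub>m A) * (b \<cdot>\<^sub>m B) = (a * b :: complex) \<cdot>\<^sub>m (A * B)"
  by (simp add: mult_smult_assoc_mat[of _ N N _ N] mult_smult_distrib[of _ N N _ N] smult_smult_mat mult.commute)

lemma is_pauli_carrier: "is_pauli n P \<Longrightarrow> sqm n P"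
  unfolding is_pauli_def by auto

lemma is_pauli_one: "is_pauli n (1\<^sub>m (dimq n))"
  unfolding is_pauli_def by (rule exI[of _ 0], rule exI[of _ "\<lambda>_. False"], rule exI[of _ "\<lambda>_. False"])
    (simp add: pauli_id one_smult_mat')

lemma is_pauli_mult: "is_pauli n A \<Longrightarrow> is_pauli n B \<Longrightarrow> is_pauli n (A * B)"
proof -
  assume "is_pauli n A" "is_pauli n B"
  then obtain k x z k' x' z' where A: "A = (\<i> ^ k) \<cdot>\<^sub>m pauli n x z" and B: "B = (\<i> ^ k') \<cdot>\<^sub>m pauli n x' z'"
    unfolding is_pauli_def by blast
  have "A * B = (\<i> ^ k * \<i> ^ k') \<cdot>\<^sub>m (pauli n x z * pauli n x' z')"
    unfolding A B by (simp add: smult_mult_smult[of _ "dimq n"])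
  also have "\<dots> = (\<i> ^ (k + k' + 2 * card {q. q < n \<and> z q \<and> x' q})) \<cdot>\<^sub>m
      pauli n (\<lambda>q. x q \<noteq> x' q) (\<lambda>q. z q \<noteq> z' q)"
    unfolding pauli_mult smult_smult_mat sgnc_i by (simp add: power_add)
  finally show ?thesis unfolding is_pauli_def by blast
qed

lemma is_pauli_smult: "is_pauli n A \<Longrightarrow> is_pauli n ((\<i> ^ j) \<cdot>\<^sub>m A)"
proof -
  assume "is_pauli n A"
  then obtain k x z where "A = (\<i> ^ k) \<cdot>\<^sub>m pauli n x z" unfolding is_pauli_def by blast
  then have "(\<i> ^ j) \<cdot>\<^sub>m A = (\<i> ^ (j + k)) \<cdot>\<^sub>m pauli n x z" by (simp add: smult_smult_mat power_add)
  then show ?thesis unfolding is_pauli_def by blast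
qed

lemma pauli_sq: "is_pauli n P \<Longrightarrow> \<exists>k. P * P = (\<i> ^ k) \<cdot>\<^sub>m 1\<^sub>m (dimq n)"
proof -
  assume "is_pauli n P"
  then obtain k x z where P: "P = (\<i> ^ k) \<cdot>\<^sub>m pauli n x z" unfolding is_pauli_def by blast
  have "P * P = (\<i> ^ k * \<i> ^ k) \<cdot>\<^sub>m (pauli n x z * pauli n x z)"
    unfolding P by (simp add: smult_mult_smult[of _ "dimq n"])
  also have "\<dots> = (\<i> ^ k * \<i> ^ k * \<i> ^ (2 * card {q. q < n \<and> z q \<and> x q})) \<cdot>\<^sub>m 1\<^sub>m (dimq n)"
    unfolding pauli_mult smult_smult_mat sgnc_i by (simp add: pauli_id)
  also have "\<i> ^ k * \<i> ^ k * \<i> ^ (2 * card {q. q < n \<and> z q \<and> x q}) =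
     \<i> ^ (k + k + 2 * card {q. q < n \<and> z q \<and> x q})" by (simp only: power_add)
  finally show ?thesis by blast
qed

lemma one_mat_nonzero: "1\<^sub>m (dimq n) \<noteq> (0\<^sub>m (dimq n) (dimq n) :: complex mat)"
proof
  assume "1\<^sub>m (dimq n) = (0\<^sub>m (dimq n) (dimq n) :: complex mat)"
  then have "(1\<^sub>m (dimq n) :: complex mat) $$ (0,0) = 0\<^sub>m (dimq n) (dimq n) $$ (0,0)" by simp
  then show False by simp
qed

lemma ipow_nonzero: "\<i> ^ k \<noteq> 0" by simp

lemma pauli_nonzero: "is_pauli n P \<Longrightarrow> P \<noteq> 0\<^sub>m (dimq n) (dimq n)"
proof
  assume P: "is_pauli n P" and Z: "P = 0\<^sub>m (dimq n) (dimq n)"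
  obtain k where "P * P = (\<i> ^ k) \<cdot>\<^sub>m 1\<^sub>m (dimq n)" using pauli_sq[OF P] by blast
  then have "(\<i> ^ k) \<cdot>\<^sub>m 1\<^sub>m (dimq n) = (0\<^sub>m (dimq n) (dimq n) :: complex mat)" using Z by simp
  then have "((\<i> ^ k) \<cdot>\<^sub>m 1\<^sub>m (dimq n)) $$ (0,0) = (0\<^sub>m (dimq n) (dimq n) :: complex mat) $$ (0,0)"
    by simp
  then show False by simp
qed

lemma neg_eq_self: "sqm n X \<Longrightarrow> (-1 :: complex) \<cdot>\<^sub>m X = X \<Longrightarrow> X = 0\<^sub>m (dimq n) (dimq n)"
proof (rule eq_matI)
  fix i j assume X: "sqm n X" and e: "(-1 :: complex) \<cdot>\<^sub>m X = X"
    and ij: "i < dim_row (0\<^sub>m (dimq n) (dimq n))" "j < dim_col (0\<^sub>m (dimq n) (dimq n) :: complex mat)"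
  have "((-1 :: complex) \<cdot>\<^sub>m X) $$ (i,j) = X $$ (i,j)" using e by simp
  then have "- X $$ (i,j) = X $$ (i,j)" using X ij by simp
  then show "X $$ (i, j) = 0\<^sub>m (dimq n) (dimq n) $$ (i, j)" using ij by simp
qed auto

lemma pauli_comm_anti:
  assumes "is_pauli n E" "is_pauli n A"
  shows "E * A = A * E \<or> E * A = (-1) \<cdot>\<^sub>m (A * E)"
proof -
  obtain k x z k' x' z' where E: "E = (\<i> ^ k) \<cdot>\<^sub>m pauli n x z" and A: "A = (\<i> ^ k') \<cdot>\<^sub>m pauli n x' z'"
    using assms unfolding is_pauli_def by blast
  let ?p = "pauli n (\<lambda>q. x q \<noteq> x' q) (\<lambda>q. z q \<noteq> z' q)"
  have p2: "pauli n (\<lambda>q. x' q = (\<not> x q)) (\<lambda>q. z' q = (\<not> z q)) = pauli n (\<lambda>q. x q = (\<not> x' q)) (\<lambda>q. z q = (\<not> z' q))"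
    by (rule arg_cong2[where f="pauli n"]) auto
  have EA: "E * A = (\<i> ^ k * \<i> ^ k' * sgnc n (\<lambda>q. z q \<and> x' q)) \<cdot>\<^sub>m ?p"
    unfolding E A by (simp add: smult_mult_smult[of _ "dimq n"] pauli_mult smult_smult_mat)
  have AE: "A * E = (\<i> ^ k * \<i> ^ k' * sgnc n (\<lambda>q. z' q \<and> x q)) \<cdot>\<^sub>m ?p"
    unfolding E A by (simp add: smult_mult_smult[of _ "dimq n"] pauli_mult smult_smult_mat p2 mult.commute)
  have s: "sgnc n P = 1 \<or> sgnc n P = -1" for P unfolding sgnc_def by (metis neg_one_even_power neg_one_odd_power)
  show ?thesis
  proof (cases "sgnc n (\<lambda>q. z q \<and> x' q) = sgnc n (\<lambda>q. z' q \<and> x q)")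
    case True then show ?thesis using EA AE by simp
  next
    case False
    then have "sgnc n (\<lambda>q. z q \<and> x' q) = - sgnc n (\<lambda>q. z' q \<and> x q)" using s by (metis add.inverse_inverse)
    then show ?thesis using EA AE by (simp add: smult_smult_mat)
  qed
qed


definition sg :: "complex mat \<Rightarrow> complex mat \<Rightarrow> int" where
  "sg E A = (if E * A = A * E then 1 else -1)"

lemma sg_pm: "sg E A = 1 \<or> sg E A = -1" unfolding sg_def by auto

lemma sg_cases:
  assumes "is_pauli n E" "is_pauli n A"
  shows "E * A = (of_int (sg E A) :: complex) \<cdot>\<^sub>m (A * E)"
proof (cases "E * A = A * E")
  case True then show ?thesis by (simp add: sg_def one_smult_mat')
next
  case False then show ?thesis using pauli_comm_anti[OF assms] by (simp add: sg_def)
qed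

lemma sg_eq:
  assumes "is_pauli n E" "is_pauli n A" "s = 1 \<or> s = -1"
    and "E * A = (of_int s :: complex) \<cdot>\<^sub>m (A * E)"
  shows "sg E A = s"
proof (cases "s = 1")
  case True then show ?thesis using assms by (simp add: sg_def one_smult_mat')
next
  case False
  then have s: "s = -1" using assms by auto
  have P: "is_pauli n (A * E)" by (rule is_pauli_mult) (use assms in auto)
  show ?thesis
  proof (cases "E * A = A * E")
    case True
    then have "(-1 :: complex) \<cdot>\<^sub>m (A * E) = A * E" using assms s by simp
    then have "A * E = 0\<^sub>m (dimq n) (dimq n)" using neg_eq_self is_pauli_carrier[OF P] by blast
    then show ?thesis using pauli_nonzero[OF P] by simp
  qed (simp add: sg_def s)
qed

lemma assoc3: "A \<in> carrier_mat N N \<Longrightarrow> B \<in> carrier_mat N N \<Longrightarrow> C \<in> carrier_mat N N \<Longrightarrow>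
  A * B * C = A * (B * C)"
  by (rule assoc_mult_mat) auto

lemma sg_mult:
  assumes E: "is_pauli n E" and A: "is_pauli n A" and B: "is_pauli n B"
  shows "sg E (A * B) = sg E A * sg E B"
proof (rule sg_eq[where n=n])
  show "is_pauli n E" by fact
  show "is_pauli n (A * B)" using A B by (rule is_pauli_mult)
  show "sg E A * sg E B = 1 \<or> sg E A * sg E B = - 1" using sg_pm[of E A] sg_pm[of E B] by auto
  have cE: "sqm n E" and cA: "sqm n A" and cB: "sqm n B" using E A B is_pauli_carrier by auto
  have "E * (A * B) = E * A * B" using assoc3[OF cE cA cB] by simp
  also have "\<dots> = ((of_int (sg E A) :: complex) \<cdot>\<^sub>m (A * E)) * B" using sg_cases[OF E A] by simp
  also have "\<dots> = (of_int (sg E A) :: complex) \<cdot>\<^sub>m (A * (E * B))"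
    using cE cA cB by (simp add: mult_smult_assoc_mat[of _ "dimq n" "dimq n" _ "dimq n"] assoc3)
  also have "E * B = (of_int (sg E B) :: complex) \<cdot>\<^sub>m (B * E)" using sg_cases[OF E B] by simp
  also have "(of_int (sg E A) :: complex) \<cdot>\<^sub>m (A * ((of_int (sg E B) :: complex) \<cdot>\<^sub>m (B * E))) =
      (of_int (sg E A * sg E B) :: complex) \<cdot>\<^sub>m (A * B * E)"
    using cE cA cB by (simp add: mult_smult_distrib[of _ "dimq n" "dimq n" _ "dimq n"] smult_smult_mat assoc3)
  finally show "E * (A * B) = (of_int (sg E A * sg E B) :: complex) \<cdot>\<^sub>m (A * B * E)" .
qed

lemma comm_conj_gen:
  fixes V W E A :: "complex mat"
  assumes V: "V \<in> carrier_mat N N" and W: "W \<in> carrier_mat N N" and VW: "V * W = 1\<^sub>m N" and WV: "W * V = 1\<^sub>m N"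
    and E: "E \<in> carrier_mat N N" and A: "A \<in> carrier_mat N N"
  shows "(E * (V * A * W) = (V * A * W) * E) \<longleftrightarrow> ((W * E * V) * A = A * (W * E * V))"
proof
  assume h: "E * (V * A * W) = (V * A * W) * E"
  have "W * (E * (V * A * W)) * V = W * E * V * A * (W * V)"
    using V W E A by (simp add: assoc3)
  also have "\<dots> = W * E * V * A"
  proof -
    have c: "W * E * V * A \<in> carrier_mat N N" using V W E A by (meson mult_carrier_mat)
    show ?thesis by (simp only: WV right_mult_one_mat[OF c])
  qed
  finally have 1: "W * (E * (V * A * W)) * V = W * E * V * A" .
  have "W * ((V * A * W) * E) * V = (W * V) * A * (W * E * V)"
    using V W E A by (simp add: assoc3)
  also have "\<dots> = A * (W * E * V)" using A by (simp only: WV left_mult_one_mat)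
  finally have 2: "W * ((V * A * W) * E) * V = A * (W * E * V)" .
  show "(W * E * V) * A = A * (W * E * V)" using 1 2 h by simp
next
  assume h: "(W * E * V) * A = A * (W * E * V)"
  have "V * ((W * E * V) * A) * W = (V * W) * E * (V * A * W)"
    using V W E A by (simp add: assoc3)
  also have "\<dots> = E * (V * A * W)" using E by (simp only: VW left_mult_one_mat)
  finally have 1: "V * ((W * E * V) * A) * W = E * (V * A * W)" .
  have "V * (A * (W * E * V)) * W = (V * A * W) * E * (V * W)"
    using V W E A by (simp add: assoc3)
  also have "\<dots> = (V * A * W) * E"
  proof -
    have c: "V * A * W * E \<in> carrier_mat N N" using V W E A by (meson mult_carrier_mat)
    show ?thesis by (simp only: VW right_mult_one_mat[OF c])
  qed
  finally have 2: "V * (A * (W * E * V)) * W = (V * A * W) * E" .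
  show "E * (V * A * W) = (V * A * W) * E" using 1 2 h by simp
qed

lemma sg_conj_gen:
  fixes V W E A :: "complex mat"
  assumes "V \<in> carrier_mat N N" "W \<in> carrier_mat N N" "V * W = 1\<^sub>m N" "W * V = 1\<^sub>m N"
    "E \<in> carrier_mat N N" "A \<in> carrier_mat N N"
  shows "sg E (V * A * W) = sg (W * E * V) A"
  unfolding sg_def using comm_conj_gen[OF assms] by simp


lemma adj_dims[simp]: "dim_row (mat_adjoint A) = dim_col A" "dim_col (mat_adjoint A) = dim_row A"
  unfolding mat_adjoint_def by simp_all

lemma adj_index: "i < dim_col A \<Longrightarrow> j < dim_row A \<Longrightarrow> mat_adjoint A $$ (i, j) = cnj (A $$ (j, i))"
proof -
  assume i: "i < dim_col A" and j: "j < dim_row A"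
  have "mat_adjoint A $$ (i, j) = (map conjugate (cols A) ! i) $ j"
    unfolding mat_adjoint_def by (rule mat_of_rows_index) (use i j in simp_all)
  also have "\<dots> = conjugate (col A i) $ j" using i by simp
  also have "\<dots> = conjugate (col A i $ j)" using j by (simp only: vec_index_conjugate dim_col)
  also have "\<dots> = cnj (A $$ (j, i))" using i j by simp
  finally show ?thesis .
qed

lemma adj_carrier: "A \<in> carrier_mat N N \<Longrightarrow> mat_adjoint A \<in> carrier_mat N N"
  unfolding carrier_mat_def by simp

lemma adj_mult:
  fixes A B :: "complex mat"
  assumes A: "A \<in> carrier_mat N N" and B: "B \<in> carrier_mat N N"
  shows "mat_adjoint (A * B) = mat_adjoint B * mat_adjoint A"
proof (rule eq_matI)
  fix i j assume i: "i < dim_row (mat_adjoint B * mat_adjoint A)" and j: "j < dim_col (mat_adjoint B * mat_adjoint A)"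
  then have i: "i < N" and j: "j < N" using A B by auto
  have "mat_adjoint (A * B) $$ (i, j) = cnj (\<Sum>k = 0..<N. A $$ (j, k) * B $$ (k, i))"
    using A B i j by (simp add: adj_index index_mult_mat scalar_prod_def)
  also have "\<dots> = (\<Sum>k = 0..<N. mat_adjoint B $$ (i, k) * mat_adjoint A $$ (k, j))"
    unfolding cnj_sum using A B i j by (intro sum.cong) (auto simp: adj_index)
  also have "\<dots> = (mat_adjoint B * mat_adjoint A) $$ (i, j)"
    using A B i j by (simp add: index_mult_mat scalar_prod_def)
  finally show "mat_adjoint (A * B) $$ (i, j) = (mat_adjoint B * mat_adjoint A) $$ (i, j)" .
qed (use A B in auto)

lemma adj_one: "mat_adjoint (1\<^sub>m N :: complex mat) = 1\<^sub>m N"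
  by (rule eq_matI) (auto simp: adj_index)

lemma unitary_carrier: "is_unitary n U \<Longrightarrow> sqm n U \<and> sqm n (mat_adjoint U)"
  unfolding is_unitary_def by (auto intro: adj_carrier)

lemma clifford_one: "is_clifford n (1\<^sub>m (dimq n))"
proof -
  have "is_pauli n (1\<^sub>m (dimq n) * P * 1\<^sub>m (dimq n))" if "is_pauli n P" for P
    using that is_pauli_carrier[OF that] by simp
  moreover have "(1\<^sub>m (dimq n) :: complex mat) * 1\<^sub>m (dimq n) = 1\<^sub>m (dimq n)" by simp
  ultimately show ?thesis unfolding is_clifford_def is_unitary_def adj_one by simp
qed

lemma clifford_mult:
  assumes U: "is_clifford n U" and V: "is_clifford n V"
  shows "is_clifford n (U * V)"
proof -
  have cU: "sqm n U" "sqm n (mat_adjoint U)"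
    using U unfolding is_clifford_def is_unitary_def by (auto intro: adj_carrier)
  have eU: "U * mat_adjoint U = 1\<^sub>m (dimq n)" "mat_adjoint U * U = 1\<^sub>m (dimq n)"
    using U unfolding is_clifford_def is_unitary_def by auto
  have cV: "sqm n V" "sqm n (mat_adjoint V)"
    using V unfolding is_clifford_def is_unitary_def by (auto intro: adj_carrier)
  have eV: "V * mat_adjoint V = 1\<^sub>m (dimq n)" "mat_adjoint V * V = 1\<^sub>m (dimq n)"
    using V unfolding is_clifford_def is_unitary_def by auto
  have adj: "mat_adjoint (U * V) = mat_adjoint V * mat_adjoint U" using cU cV by (simp add: adj_mult)
  have u1: "U * V * mat_adjoint (U * V) = 1\<^sub>m (dimq n)"
  proof -
    have "U * V * mat_adjoint (U * V) = U * (V * mat_adjoint V) * mat_adjoint U"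
      unfolding adj using cU cV by (simp add: assoc3)
    also have "\<dots> = U * mat_adjoint U" using cU cV eV by simp
    also have "\<dots> = 1\<^sub>m (dimq n)" using eU by simp
    finally show ?thesis .
  qed
  have u2: "mat_adjoint (U * V) * (U * V) = 1\<^sub>m (dimq n)"
  proof -
    have "mat_adjoint (U * V) * (U * V) = mat_adjoint V * (mat_adjoint U * U) * V"
      unfolding adj using cU cV by (simp add: assoc3)
    also have "\<dots> = mat_adjoint V * V" using cU cV eU by simp
    also have "\<dots> = 1\<^sub>m (dimq n)" using eV by simp
    finally show ?thesis .
  qed
  have p: "is_pauli n (U * V * P * mat_adjoint (U * V))" if P: "is_pauli n P" for P
  proof -
    have cP: "sqm n P" using P by (rule is_pauli_carrier)
    have "U * V * P * mat_adjoint (U * V) = U * (V * P * mat_adjoint V) * mat_adjoint U"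
      unfolding adj using cU cV cP by (simp add: assoc3)
    moreover have "is_pauli n (V * P * mat_adjoint V)" using V P unfolding is_clifford_def by blast
    ultimately show ?thesis using U unfolding is_clifford_def by simp
  qed
  show ?thesis unfolding is_clifford_def is_unitary_def using u1 u2 p cU cV by auto
qed

lemma finite_paulis: "finite {P. is_pauli n P}"
proof -
  define F where "F = (\<lambda>A q. q \<in> A) ` Pow {..<n}"
  have "{P. is_pauli n P} \<subseteq> (\<lambda>(k, x, z). (\<i> ^ k) \<cdot>\<^sub>m pauli n x z) ` ({..<4::nat} \<times> F \<times> F)"
  proof
    fix P assume "P \<in> {P. is_pauli n P}"
    then obtain k x z where P: "P = (\<i> ^ k) \<cdot>\<^sub>m pauli n x z" unfolding is_pauli_def by blast
    have e: "P = (\<i> ^ (k mod 4)) \<cdot>\<^sub>m pauli n (\<lambda>q. q \<in> {q. q < n \<and> x q}) (\<lambda>q. q \<in> {q. q < n \<and> z q})"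
      unfolding P using pauli_restrict[of n x z] i_pow_mod[of k] by simp
    have "(\<lambda>q. q \<in> {q. q < n \<and> x q}) \<in> F"
      unfolding F_def by (rule image_eqI, rule refl, auto)
    moreover have "(\<lambda>q. q \<in> {q. q < n \<and> z q}) \<in> F"
      unfolding F_def by (rule image_eqI, rule refl, auto)
    ultimately have "(k mod 4, (\<lambda>q. q \<in> {q. q < n \<and> x q}), (\<lambda>q. q \<in> {q. q < n \<and> z q})) \<in> {..<4::nat} \<times> F \<times> F"
      by auto
    then show "P \<in> (\<lambda>(k, x, z). (\<i> ^ k) \<cdot>\<^sub>m pauli n x z) ` ({..<4::nat} \<times> F \<times> F)"
      using e by (intro image_eqI[where x="(k mod 4, (\<lambda>q. q \<in> {q. q < n \<and> x q}), (\<lambda>q. q \<in> {q. q < n \<and> z q}))"]) auto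
  qed
  moreover have "finite F" unfolding F_def by simp
  ultimately show ?thesis by (meson finite_SigmaI finite_imageI finite_lessThan finite_subset)
qed

lemma clifford_inv_pauli:
  assumes U: "is_clifford n U" and P: "is_pauli n P"
  shows "is_pauli n (mat_adjoint U * P * U)"
proof -
  have cU: "sqm n U" "sqm n (mat_adjoint U)"
    using U unfolding is_clifford_def is_unitary_def by (auto intro: adj_carrier)
  have eU: "U * mat_adjoint U = 1\<^sub>m (dimq n)" "mat_adjoint U * U = 1\<^sub>m (dimq n)"
    using U unfolding is_clifford_def is_unitary_def by auto
  let ?S = "{P. is_pauli n P}"
  let ?f = "\<lambda>P. U * P * mat_adjoint U"
  have bk: "mat_adjoint U * ?f Q * U = Q" if "is_pauli n Q" for Q
  proof -
    have cQ: "sqm n Q" using that by (rule is_pauli_carrier)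
    have "mat_adjoint U * ?f Q * U = (mat_adjoint U * U) * Q * (mat_adjoint U * U)"
      using cU cQ by (simp add: assoc3)
    then show ?thesis using cU cQ eU by simp
  qed
  have "?f ` ?S = ?S"
  proof (rule endo_inj_surj)
    show "finite ?S" by (rule finite_paulis)
    show "?f ` ?S \<subseteq> ?S" using U unfolding is_clifford_def by auto
    show "inj_on ?f ?S" by (rule inj_on_inverseI[where g="\<lambda>P. mat_adjoint U * P * U"]) (use bk in auto)
  qed
  then obtain Q where Q: "is_pauli n Q" "P = ?f Q" using P by (metis (no_types, lifting) imageE mem_Collect_eq)
  then show ?thesis using bk by simp
qed

lemma sgnc_single: "q < n \<Longrightarrow> x q \<Longrightarrow> sgnc n (\<lambda>r. r = q \<and> x r) = -1"
proof -
  assume "q < n" "x q"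
  then have "{r. r < n \<and> r = q \<and> x r} = {q}" by auto
  then show ?thesis unfolding sgnc_def by simp
qed

lemma sgnc_false: "sgnc n (\<lambda>r. False) = 1" unfolding sgnc_def by simp

lemma pauli_swap: "pauli n x z * pauli n x' z' =
   (sgnc n (\<lambda>q. z q \<and> x' q) * sgnc n (\<lambda>q. z' q \<and> x q)) \<cdot>\<^sub>m (pauli n x' z' * pauli n x z)"
proof -
  have p2: "pauli n (\<lambda>q. x' q \<noteq> x q) (\<lambda>q. z' q \<noteq> z q) = pauli n (\<lambda>q. x q \<noteq> x' q) (\<lambda>q. z q \<noteq> z' q)"
    by (rule arg_cong2[where f="pauli n"]) auto
  show ?thesis unfolding pauli_mult p2 smult_smult_mat
    by (simp only: mult.assoc sgnc_sq mult_1_right)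
qed

lemma central_pauli:
  assumes P: "is_pauli n P" and C: "\<And>E. is_pauli n E \<Longrightarrow> E * P = P * E"
  shows "\<exists>k. P = (\<i> ^ k) \<cdot>\<^sub>m 1\<^sub>m (dimq n)"
proof -
  obtain k x z where Pk: "P = (\<i> ^ k) \<cdot>\<^sub>m pauli n x z" using P unfolding is_pauli_def by blast
  have anti: False if E: "is_pauli n E" and e: "E * P = (-1) \<cdot>\<^sub>m (P * E)" for E
  proof -
    have "P * E = (-1) \<cdot>\<^sub>m (P * E)" using C[OF E] e by simp
    then have "P * E = 0\<^sub>m (dimq n) (dimq n)" using neg_eq_self[where n=n and X="P * E"] is_pauli_carrier[OF is_pauli_mult[OF P E]] by simp
    then show False using pauli_nonzero[OF is_pauli_mult[OF P E]] by simp
  qed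
  have pE: "is_pauli n (pauli n a b)" for a b unfolding is_pauli_def
    by (rule exI[of _ 0]) (auto simp: one_smult_mat')
  have nx: "\<not> x q" if q: "q < n" for q
  proof
    assume xq: "x q"
    let ?E = "pauli n (\<lambda>_. False) (\<lambda>r. r = q)"
    have "?E * pauli n x z = (sgnc n (\<lambda>r. r = q \<and> x r) * sgnc n (\<lambda>r. z r \<and> False)) \<cdot>\<^sub>m (pauli n x z * ?E)"
      by (rule pauli_swap)
    then have "?E * pauli n x z = (-1) \<cdot>\<^sub>m (pauli n x z * ?E)"
      using sgnc_single[OF q, of x] xq sgnc_false by simp
    then have "?E * P = (-1) \<cdot>\<^sub>m (P * ?E)" unfolding Pk
      by (simp add: mult_smult_distrib[of _ "dimq n" "dimq n" _ "dimq n"] mult_smult_assoc_mat[of _ "dimq n" "dimq n" _ "dimq n"] smult_smult_mat mult.commute)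
    then show False using anti pE by blast
  qed
  have nz: "\<not> z q" if q: "q < n" for q
  proof
    assume zq: "z q"
    let ?E = "pauli n (\<lambda>r. r = q) (\<lambda>_. False)"
    have "?E * pauli n x z = (sgnc n (\<lambda>r. False \<and> x r) * sgnc n (\<lambda>r. z r \<and> r = q)) \<cdot>\<^sub>m (pauli n x z * ?E)"
      by (rule pauli_swap)
    moreover have "sgnc n (\<lambda>r. z r \<and> r = q) = -1"
      using sgnc_single[OF q, of z] zq by (metis (mono_tags, lifting) sgnc_cong)
    ultimately have "?E * pauli n x z = (-1) \<cdot>\<^sub>m (pauli n x z * ?E)"
      using sgnc_false by simp
    then have "?E * P = (-1) \<cdot>\<^sub>m (P * ?E)" unfolding Pk
      by (simp add: mult_smult_distrib[of _ "dimq n" "dimq n" _ "dimq n"] mult_smult_assoc_mat[of _ "dimq n" "dimq n" _ "dimq n"] smult_smult_mat mult.commute)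
    then show False using anti pE by blast
  qed
  have ex: "(\<lambda>q. q < n \<and> x q) = (\<lambda>_. False)" using nx by auto
  have ez: "(\<lambda>q. q < n \<and> z q) = (\<lambda>_. False)" using nz by auto
  have "pauli n x z = pauli n (\<lambda>_. False) (\<lambda>_. False)"
    using pauli_restrict[of n x z] unfolding ex ez .
  then have "P = (\<i> ^ k) \<cdot>\<^sub>m 1\<^sub>m (dimq n)" unfolding Pk pauli_id by simp
  then show ?thesis by (rule exI)
qed

lemma eq_mod_phase_crit:
  assumes A: "is_pauli n A" and B: "is_pauli n B"
    and S: "\<And>E. is_pauli n E \<Longrightarrow> sg E A = sg E B"
  shows "eq_mod_phase A B"
proof -
  have M: "is_pauli n (A * B)" using A B by (rule is_pauli_mult)
  have "\<exists>k. A * B = (\<i> ^ k) \<cdot>\<^sub>m 1\<^sub>m (dimq n)"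
  proof (rule central_pauli[OF M])
    fix E assume E: "is_pauli n E"
    have "sg E (A * B) = sg E A * sg E B" using E A B by (rule sg_mult)
    also have "\<dots> = 1" using S[OF E] sg_pm[of E B] by auto
    finally show "E * (A * B) = A * B * E" unfolding sg_def by (auto split: if_splits)
  qed
  then obtain k where k: "A * B = (\<i> ^ k) \<cdot>\<^sub>m 1\<^sub>m (dimq n)" by blast
  obtain j where j: "B * B = (\<i> ^ j) \<cdot>\<^sub>m 1\<^sub>m (dimq n)" using pauli_sq[OF B] by blast
  have cA: "sqm n A" and cB: "sqm n B" using A B is_pauli_carrier by auto
  have "A * (B * B) = (A * B) * B" using cA cB by (simp add: assoc3)
  then have "(\<i> ^ j) \<cdot>\<^sub>m A = (\<i> ^ k) \<cdot>\<^sub>m B"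
    unfolding j k using cA cB
    by (simp add: mult_smult_distrib[of _ "dimq n" "dimq n" _ "dimq n"] mult_smult_assoc_mat[of _ "dimq n" "dimq n" _ "dimq n"])
  then have "(\<i> ^ (3 * j)) \<cdot>\<^sub>m ((\<i> ^ j) \<cdot>\<^sub>m A) = (\<i> ^ (3 * j)) \<cdot>\<^sub>m ((\<i> ^ k) \<cdot>\<^sub>m B)" by simp
  moreover have "\<i> ^ (3 * j) * \<i> ^ j = (1::complex)"
  proof -
    have "\<i> ^ (3 * j) * \<i> ^ j = (\<i> ^ 4) ^ j" by (simp flip: power_add power_mult)
    then show ?thesis by (simp add: i4)
  qed
  ultimately have Aeq: "A = (\<i> ^ (3 * j + k)) \<cdot>\<^sub>m B"
    by (simp only: smult_smult_mat one_smult_mat' power_add)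
  show ?thesis unfolding eq_mod_phase_def by (rule exI[of _ "3 * j + k"], rule Aeq)
qed


fun Wu :: "nat \<Rightarrow> circuit \<Rightarrow> nat \<Rightarrow> complex mat" where
  "Wu n C 0 = 1\<^sub>m (dimq n)"
| "Wu n C (Suc k) = level_unitary n C (Suc k) * Wu n C k"

definition ops_wf :: "nat \<Rightarrow> circuit \<Rightarrow> bool" where
  "ops_wf n C \<longleftrightarrow> (\<forall>x\<in>set C. op_wf n (fst x))"

lemma ops_wf_Cons[simp]: "ops_wf n (a # C) \<longleftrightarrow> op_wf n (fst a) \<and> ops_wf n C"
  unfolding ops_wf_def by simp

lemma clifford_carrier: "is_clifford n U \<Longrightarrow> sqm n U"
  unfolding is_clifford_def is_unitary_def by simp

lemma clifford_adj_carrier: "is_clifford n U \<Longrightarrow> sqm n (mat_adjoint U)"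
  unfolding is_clifford_def is_unitary_def by (simp add: adj_carrier)

lemma clifford_unit: "is_clifford n U \<Longrightarrow> U * mat_adjoint U = 1\<^sub>m (dimq n) \<and> mat_adjoint U * U = 1\<^sub>m (dimq n)"
  unfolding is_clifford_def is_unitary_def by simp

lemma lu_clifford: "ops_wf n C \<Longrightarrow> is_clifford n (level_unitary n C l)"
proof (induction C)
  case Nil show ?case by (simp add: clifford_one)
next
  case (Cons a C)
  obtain op l' where a: "a = (op, l')" by (cases a)
  show ?case
  proof (cases op)
    case (Gate Q U)
    then have "is_clifford n U" using Cons.prems a by simp
    then show ?thesis using Cons a Gate by (auto intro: clifford_mult)
  next
    case (Meas S)
    then show ?thesis using Cons a by simp
  qed
qed

lemma Wu_clifford: "ops_wf n C \<Longrightarrow> is_clifford n (Wu n C k)"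
  by (induction k) (auto simp: clifford_one intro: clifford_mult lu_clifford)

lemma lu_none: "(\<forall>x\<in>set C. snd x \<noteq> l) \<Longrightarrow> level_unitary n C l = 1\<^sub>m (dimq n)"
proof (induction C)
  case Nil show ?case by simp
next
  case (Cons a C)
  obtain op l' where a: "a = (op, l')" by (cases a)
  then show ?case using Cons by (cases op) auto
qed

lemma Wu_one: "(\<forall>x\<in>set C. k < snd x) \<Longrightarrow> Wu n C k = 1\<^sub>m (dimq n)"
proof (induction k)
  case 0 show ?case by simp
next
  case (Suc k)
  have "level_unitary n C (Suc k) = 1\<^sub>m (dimq n)" using Suc.prems by (intro lu_none) auto
  moreover have "\<forall>x\<in>set C. k < snd x" using Suc.prems by auto
  then have "Wu n C k = 1\<^sub>m (dimq n)" using Suc.IH by blast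
  ultimately show ?case by simp
qed

lemma Wu_meas: "Wu n ((Meas S, l) # C) k = Wu n C k"
  by (induction k) simp_all

lemma Wu_gate:
  assumes lev: "\<forall>x\<in>set C. l \<le> snd x" and l1: "1 \<le> l" and lk: "l \<le> k"
    and wf: "ops_wf n ((Gate Q U, l) # C)"
  shows "Wu n ((Gate Q U, l) # C) k = Wu n C k * U"
  using lk
proof (induction k rule: dec_induct)
  case base
  obtain l0 where l0: "l = Suc l0" using l1 by (cases l) auto
  have cU: "sqm n U" using wf by (simp add: clifford_carrier)
  have cL: "sqm n (level_unitary n C l)" using wf by (simp add: clifford_carrier lu_clifford)
  have w1: "Wu n ((Gate Q U, l) # C) l0 = 1\<^sub>m (dimq n)" using lev l0 by (intro Wu_one) auto
  have w2: "Wu n C l0 = 1\<^sub>m (dimq n)" using lev l0 by (intro Wu_one) auto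
  show ?case unfolding l0 using w1 w2 cU cL l0 by simp
next
  case (step k)
  have cU: "sqm n U" using wf by (simp add: clifford_carrier)
  have cL: "sqm n (level_unitary n C (Suc k))" using wf by (simp add: clifford_carrier lu_clifford)
  have cW: "sqm n (Wu n C k)" using wf by (simp add: clifford_carrier Wu_clifford)
  have "Wu n ((Gate Q U, l) # C) (Suc k) = level_unitary n C (Suc k) * (Wu n C k * U)"
    using step by simp
  also have "\<dots> = Wu n C (Suc k) * U" using cU cL cW by (simp add: assoc3)
  finally show ?case .
qed

lemma cc_tail: "clifford_circuit n (a # C) \<Longrightarrow> clifford_circuit n C"
  unfolding clifford_circuit_def
proof (intro conjI)
  assume h: "(\<forall>(op, l)\<in>set (a # C). op_wf n op \<and> 1 \<le> l) \<and> sorted (map snd (a # C)) \<and>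
    (\<forall>i<length (a # C). \<forall>j<length (a # C). i \<noteq> j \<longrightarrow> snd ((a # C) ! i) = snd ((a # C) ! j) \<longrightarrow>
        op_support n (fst ((a # C) ! i)) \<inter> op_support n (fst ((a # C) ! j)) = {})"
  show "\<forall>(op, l)\<in>set C. op_wf n op \<and> 1 \<le> l" using h by auto
  show "sorted (map snd C)" using h by simp
  show "\<forall>i<length C. \<forall>j<length C. i \<noteq> j \<longrightarrow> snd (C ! i) = snd (C ! j) \<longrightarrow>
        op_support n (fst (C ! i)) \<inter> op_support n (fst (C ! j)) = {}"
  proof (intro allI impI)
    fix i j assume "i < length C" "j < length C" "i \<noteq> j" "snd (C ! i) = snd (C ! j)"
    then show "op_support n (fst (C ! i)) \<inter> op_support n (fst (C ! j)) = {}"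
      using h[THEN conjunct2, THEN conjunct2, rule_format, of "Suc i" "Suc j"] by simp
  qed
qed

lemma cc_head_le: "clifford_circuit n ((op, l) # C) \<Longrightarrow> \<forall>x\<in>set C. l \<le> snd x"
  unfolding clifford_circuit_def by auto

lemma cc_level: "clifford_circuit n C \<Longrightarrow> x \<in> set C \<Longrightarrow> 1 \<le> snd x"
  unfolding clifford_circuit_def by auto

lemma cc_wf: "clifford_circuit n C \<Longrightarrow> ops_wf n C"
  unfolding clifford_circuit_def ops_wf_def by auto

lemma cc_disjoint:
  assumes C: "clifford_circuit n C" and g: "(Gate Q U, l) \<in> set C" and m: "(Meas S, l) \<in> set C"
  shows "Q \<inter> pauli_support n S = {}"
proof -
  obtain i where i: "i < length C" "C ! i = (Gate Q U, l)" using g by (auto simp: in_set_conv_nth)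
  obtain j where j: "j < length C" "C ! j = (Meas S, l)" using m by (auto simp: in_set_conv_nth)
  have "i \<noteq> j" using i j by auto
  then show ?thesis using C i j unfolding clifford_circuit_def by force
qed

lemma gate_meas_comm:
  assumes g: "op_wf n (Gate Q U)" and S: "is_hermitian_pauli n S" and d: "Q \<inter> pauli_support n S = {}"
  shows "U * S = S * U"
proof -
  obtain k x z where Sk: "S = (\<i> ^ k) \<cdot>\<^sub>m pauli n x z"
    using S unfolding is_hermitian_pauli_def is_pauli_def by blast
  have "\<forall>q\<in>Q. \<not> x q \<and> \<not> z q"
  proof (intro ballI)
    fix q assume q: "q \<in> Q"
    then have "q < n" using g by auto
    then have "\<not> (x q \<or> z q)" using q d Sk unfolding pauli_support_def by blast
    then show "\<not> x q \<and> \<not> z q" by simp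
  qed
  moreover have "acts_within n Q U" using g by simp
  ultimately have c: "U * pauli n x z = pauli n x z * U" unfolding acts_within_def by blast
  have cU: "sqm n U" using g by (simp add: clifford_carrier)
  show ?thesis unfolding Sk using c cU
    by (simp add: mult_smult_distrib[of _ "dimq n" "dimq n" _ "dimq n"] mult_smult_assoc_mat[of _ "dimq n" "dimq n" _ "dimq n"])
qed

lemma cc_comm:
  assumes C: "clifford_circuit n C" and g: "(Gate Q U, l) \<in> set C" and m: "(Meas S, l) \<in> set C"
  shows "U * S = S * U"
proof -
  have "\<forall>x\<in>set C. op_wf n (fst x)" using cc_wf[OF C] unfolding ops_wf_def .
  then have "op_wf n (fst (Gate Q U, l))" using g by blast
  then have "op_wf n (Gate Q U)" by simp
  moreover have "is_hermitian_pauli n S" using C m unfolding clifford_circuit_def by auto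
  ultimately show ?thesis using cc_disjoint[OF C g m] gate_meas_comm by blast
qed

lemma lu_comm:
  assumes "ops_wf n C" "sqm n S" "\<And>Q U. (Gate Q U, l) \<in> set C \<Longrightarrow> U * S = S * U"
  shows "level_unitary n C l * S = S * level_unitary n C l"
  using assms
proof (induction C)
  case Nil then show ?case by simp
next
  case (Cons a C)
  obtain op l' where a: "a = (op, l')" by (cases a)
  show ?case
  proof (cases op)
    case (Gate Q U)
    show ?thesis
    proof (cases "l' = l")
      case True
      have cU: "sqm n U" using Cons.prems a Gate by (simp add: clifford_carrier)
      have cL: "sqm n (level_unitary n C l)" using Cons.prems by (simp add: clifford_carrier lu_clifford)
      have us: "U * S = S * U" using Cons.prems(3)[of Q U] a Gate True by simp
      have ih: "level_unitary n C l * S = S * level_unitary n C l"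
        by (rule Cons.IH) (use Cons.prems in auto)
      have "level_unitary n C l * U * S = level_unitary n C l * (U * S)" using cU cL Cons.prems by (simp add: assoc3)
      also have "\<dots> = (level_unitary n C l * S) * U" unfolding us using cU cL Cons.prems by (simp add: assoc3)
      also have "\<dots> = S * (level_unitary n C l * U)" unfolding ih using cU cL Cons.prems by (simp add: assoc3)
      finally show ?thesis using a Gate True by simp
    next
      case False
      have "level_unitary n C l * S = S * level_unitary n C l"
        by (rule Cons.IH) (use Cons.prems in auto)
      then show ?thesis using a Gate False by simp
    qed
  next
    case (Meas S')
    have "level_unitary n C l * S = S * level_unitary n C l"
      by (rule Cons.IH) (use Cons.prems in auto)
    then show ?thesis using a Meas by simp
  qed
qed

lemma meas_in_set: "j < length (meas_list C) \<Longrightarrow> (Meas (fst (meas_list C ! j)), snd (meas_list C ! j)) \<in> set C"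
proof (induction C arbitrary: j rule: meas_list.induct)
  case 1 then show ?case by simp
next
  case (2 Q U l C) then show ?case by simp
next
  case (3 S l C) then show ?case by (cases j) auto
qed


declare back_cumulant.simps[simp del]

definition cj :: "complex mat \<Rightarrow> complex mat \<Rightarrow> complex mat" where
  "cj W E = W * E * mat_adjoint W"

definition cm :: "complex mat \<Rightarrow> complex mat \<Rightarrow> bool" where
  "cm A B \<longleftrightarrow> A * B = B * A"

fun flips :: "nat \<Rightarrow> circuit \<Rightarrow> complex mat \<Rightarrow> bool list" where
  "flips n [] E = []"
| "flips n ((Gate Q U, l) # C) E = flips n C (U * E * mat_adjoint U)"
| "flips n ((Meas S, l) # C) E = (\<not> cm E S) # flips n C E"

fun fframe :: "nat \<Rightarrow> circuit \<Rightarrow> complex mat \<Rightarrow> complex mat" where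
  "fframe n [] E = E"
| "fframe n ((Gate Q U, l) # C) E = fframe n C (U * E * mat_adjoint U)"
| "fframe n ((Meas S, l) # C) E = fframe n C E"

lemma length_flips: "length (flips n C E) = length (meas_list C)"
  by (induction n C E rule: flips.induct) auto

lemma cj_one: "sqm n E \<Longrightarrow> cj (1\<^sub>m (dimq n)) E = E"
  unfolding cj_def adj_one by simp

lemma flips_W:
  assumes "clifford_circuit n C" "is_pauli n E" "j < length (meas_list C)"
  shows "flips n C E ! j \<longleftrightarrow>
    \<not> cm (cj (Wu n C (snd (meas_list C ! j) - 1)) E) (fst (meas_list C ! j))"
  using assms
proof (induction n C E arbitrary: j rule: flips.induct)
  case (1 n E) then show ?case by simp
next
  case (2 n Q U l C E)
  let ?G = "(Gate Q U, l) # C"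
  let ?E' = "U * E * mat_adjoint U"
  have CC: "clifford_circuit n C" using "2.prems"(1) by (rule cc_tail)
  have wfG: "ops_wf n ?G" using "2.prems"(1) by (rule cc_wf)
  have Ucl: "is_clifford n U" using wfG by simp
  have E': "is_pauli n ?E'" using Ucl "2.prems"(2) unfolding is_clifford_def by blast
  have jC: "j < length (meas_list C)" using "2.prems"(3) by simp
  define S where "S = fst (meas_list C ! j)"
  define lv where "lv = snd (meas_list C ! j)"
  have ml: "meas_list ?G = meas_list C" by simp
  have ih: "flips n C ?E' ! j \<longleftrightarrow> \<not> cm (cj (Wu n C (lv - 1)) ?E') S"
    unfolding S_def lv_def by (rule "2.IH"[OF CC E' jC])
  have inC: "(Meas S, lv) \<in> set C" unfolding S_def lv_def using jC by (rule meas_in_set)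
  have lev: "\<forall>x\<in>set C. l \<le> snd x" using "2.prems"(1) by (rule cc_head_le)
  have l1: "1 \<le> l" using cc_level[OF "2.prems"(1), of "(Gate Q U, l)"] by simp
  have lvl: "l \<le> lv" using lev inC by auto
  have cE: "sqm n E" using "2.prems"(2) by (rule is_pauli_carrier)
  have cE': "sqm n ?E'" using E' by (rule is_pauli_carrier)
  have cU: "sqm n U" "sqm n (mat_adjoint U)" using Ucl by (auto simp: clifford_carrier clifford_adj_carrier)
  have eU: "U * mat_adjoint U = 1\<^sub>m (dimq n)" "mat_adjoint U * U = 1\<^sub>m (dimq n)" using Ucl clifford_unit by auto
  have key: "cm (cj (Wu n ?G (lv - 1)) E) S = cm (cj (Wu n C (lv - 1)) ?E') S"
  proof (cases "l \<le> lv - 1")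
    case True
    have wg: "Wu n ?G (lv - 1) = Wu n C (lv - 1) * U" using lev l1 True wfG by (rule Wu_gate)
    have cW: "sqm n (Wu n C (lv - 1))" "sqm n (mat_adjoint (Wu n C (lv - 1)))"
      using CC by (auto simp: clifford_carrier clifford_adj_carrier Wu_clifford cc_wf)
    have "cj (Wu n ?G (lv - 1)) E = cj (Wu n C (lv - 1)) ?E'"
      unfolding cj_def wg using cW cU cE by (simp add: adj_mult assoc3)
    then show ?thesis by simp
  next
    case False
    then have lvl': "lv = l" using lvl l1 by auto
    have w1: "Wu n ?G (lv - 1) = 1\<^sub>m (dimq n)" using lev lvl' l1 by (intro Wu_one) auto
    have w2: "Wu n C (lv - 1) = 1\<^sub>m (dimq n)" using lev lvl' l1 by (intro Wu_one) auto
    have US: "U * S = S * U"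
      by (rule cc_comm[OF "2.prems"(1)]) (use inC lvl' in auto)
    have hS: "is_hermitian_pauli n S" using "2.prems"(1) inC unfolding clifford_circuit_def by auto
    then have cS: "sqm n S" unfolding is_hermitian_pauli_def using is_pauli_carrier by blast
    have SS: "mat_adjoint U * S * U = S"
    proof -
      have "mat_adjoint U * S * U = mat_adjoint U * (U * S)" using cU cS US by (simp add: assoc3)
      also have "\<dots> = (mat_adjoint U * U) * S" using cU cS by (simp add: assoc3)
      finally show ?thesis using eU cS by simp
    qed
    have "(S * ?E' = ?E' * S) \<longleftrightarrow> ((mat_adjoint U * S * U) * E = E * (mat_adjoint U * S * U))"
      by (rule comm_conj_gen) (use cU eU cS cE in auto)
    then have "cm ?E' S = cm E S" unfolding cm_def SS by auto
    then show ?thesis unfolding w1 w2 cj_one[OF cE] cj_one[OF cE'] by simp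
  qed
  show ?case unfolding ml using ih key unfolding S_def lv_def by simp
next
  case (3 n S l C E)
  let ?M = "(Meas S, l) # C"
  have CC: "clifford_circuit n C" using "3.prems"(1) by (rule cc_tail)
  have cE: "sqm n E" using "3.prems"(2) by (rule is_pauli_carrier)
  show ?case
  proof (cases j)
    case 0
    have lev: "\<forall>x\<in>set C. l \<le> snd x" using "3.prems"(1) by (rule cc_head_le)
    have l1: "1 \<le> l" using cc_level[OF "3.prems"(1), of "(Meas S, l)"] by simp
    have "Wu n ?M (l - 1) = 1\<^sub>m (dimq n)" using lev l1 by (intro Wu_one) auto
    then show ?thesis using 0 cj_one[OF cE] by simp
  next
    case (Suc j')
    then have j': "j' < length (meas_list C)" using "3.prems"(3) by simp
    show ?thesis using "3.IH"[OF CC "3.prems"(2) j'] Suc by (simp add: Wu_meas)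
  qed
qed


lemma minus_smult: "(- S :: complex mat) = (-1) \<cdot>\<^sub>m S"
  by (rule eq_matI) auto

definition sgb :: "bool \<Rightarrow> complex" where "sgb c = (if c then -1 else 1)"

lemma mp_alt: "meas_proj n S b = (1/2) \<cdot>\<^sub>m (1\<^sub>m (dimq n) + sgb b \<cdot>\<^sub>m S)"
  unfolding meas_proj_def sgb_def by (cases b) (auto simp: minus_smult one_smult_mat')

lemma meas_proj_carrier: "sqm n S \<Longrightarrow> sqm n (meas_proj n S b)"
  unfolding mp_alt by simp

lemma meas_proj_frame:
  assumes E: "is_pauli n E" and S: "is_pauli n S"
  shows "meas_proj n S (b \<noteq> (\<not> cm E S)) * E = E * meas_proj n S b"
proof -
  have cE: "sqm n E" and cS: "sqm n S" using E S is_pauli_carrier by auto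
  let ?c = "b \<noteq> (\<not> cm E S)"
  have key: "(sgb ?c \<cdot>\<^sub>m S) * E = E * (sgb b \<cdot>\<^sub>m S)"
  proof (cases "cm E S")
    case True
    then show ?thesis using cE cS unfolding cm_def
      by (simp add: mult_smult_distrib[of _ "dimq n" "dimq n" _ "dimq n"] mult_smult_assoc_mat[of _ "dimq n" "dimq n" _ "dimq n"])
  next
    case False
    then have ES: "E * S = (-1) \<cdot>\<^sub>m (S * E)" using pauli_comm_anti[OF E S] unfolding cm_def by auto
    have "E * (sgb b \<cdot>\<^sub>m S) = sgb b \<cdot>\<^sub>m (E * S)" using cE cS by (simp add: mult_smult_distrib[of _ "dimq n" "dimq n" _ "dimq n"])
    also have "\<dots> = (sgb b * (-1)) \<cdot>\<^sub>m (S * E)" unfolding ES smult_smult_mat ..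
    also have "sgb b * (-1) = sgb ?c" using False unfolding sgb_def by auto
    also have "sgb ?c \<cdot>\<^sub>m (S * E) = (sgb ?c \<cdot>\<^sub>m S) * E" using cE cS by (simp add: mult_smult_assoc_mat[of _ "dimq n" "dimq n" _ "dimq n"])
    finally show ?thesis by simp
  qed
  have "meas_proj n S ?c * E = (1/2) \<cdot>\<^sub>m (E + (sgb ?c \<cdot>\<^sub>m S) * E)"
    unfolding mp_alt using cE cS
    by (simp add: mult_smult_assoc_mat[of _ "dimq n" "dimq n" _ "dimq n"] add_mult_distrib_mat[where nr="dimq n" and n="dimq n" and nc="dimq n"])
  also have "\<dots> = (1/2) \<cdot>\<^sub>m (E + E * (sgb b \<cdot>\<^sub>m S))" unfolding key ..
  also have "\<dots> = E * meas_proj n S b"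
    unfolding mp_alt using cE cS
    by (simp add: mult_smult_distrib[of _ "dimq n" "dimq n" _ "dimq n"] mult_add_distrib_mat[where nr="dimq n" and n="dimq n" and nc="dimq n"])
  finally show ?thesis .
qed

lemma bxor_Nil[simp]: "bxor [] [] = []" unfolding bxor_def by simp
lemma bxor_Cons[simp]: "bxor (a # as) (b # bs) = (a \<noteq> b) # bxor as bs" unfolding bxor_def by simp

lemma fframe_pauli: "ops_wf n C \<Longrightarrow> is_pauli n E \<Longrightarrow> is_pauli n (fframe n C E)"
proof (induction n C E rule: fframe.induct)
  case (2 n Q U l C E)
  have "is_clifford n U" using 2 by simp
  then have "is_pauli n (U * E * mat_adjoint U)" using "2.prems"(2) unfolding is_clifford_def by blast
  then show ?case using 2 by simp
qed auto

lemma run_carrier: "ops_wf n C \<Longrightarrow> v \<in> carrier_vec (dimq n) \<Longrightarrow> run n C os v \<in> carrier_vec (dimq n)"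
proof (induction n C os v rule: run.induct)
  case (2 n Q U l C os v)
  then have "sqm n U" by (simp add: clifford_carrier)
  then show ?case using 2 by simp
next
  case (3 n S l C v)
  then have "is_hermitian_pauli n S" by simp
  then have "sqm n S" unfolding is_hermitian_pauli_def using is_pauli_carrier by blast
  then have "meas_proj n S False *\<^sub>v v \<in> carrier_vec (dimq n)"
    using mult_mat_vec_carrier[OF meas_proj_carrier] "3.prems" by blast
  then show ?case using 3 by simp
next
  case (4 n S l C b os v)
  then have "is_hermitian_pauli n S" by simp
  then have "sqm n S" unfolding is_hermitian_pauli_def using is_pauli_carrier by blast
  then have "meas_proj n S b *\<^sub>v v \<in> carrier_vec (dimq n)"
    using mult_mat_vec_carrier[OF meas_proj_carrier] "4.prems" by blast
  then show ?case using 4 by simp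
qed auto

lemma run_smult: "ops_wf n C \<Longrightarrow> v \<in> carrier_vec (dimq n) \<Longrightarrow> run n C os (c \<cdot>\<^sub>v v) = c \<cdot>\<^sub>v run n C os v"
proof (induction n C os v rule: run.induct)
  case (2 n Q U l C os v)
  then have cU: "sqm n U" by (simp add: clifford_carrier)
  then show ?case using 2 by (simp add: mult_mat_vec[OF cU])
next
  case (3 n S l C v)
  then have "is_hermitian_pauli n S" by simp
  then have "sqm n S" unfolding is_hermitian_pauli_def using is_pauli_carrier by blast
  then have cP: "sqm n (meas_proj n S False)" by (rule meas_proj_carrier)
  then show ?case using 3 by (simp add: mult_mat_vec[OF cP])
next
  case (4 n S l C b os v)
  then have "is_hermitian_pauli n S" by simp
  then have "sqm n S" unfolding is_hermitian_pauli_def using is_pauli_carrier by blast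
  then have cP: "sqm n (meas_proj n S b)" by (rule meas_proj_carrier)
  then show ?case using 4 by (simp add: mult_mat_vec[OF cP])
qed auto

lemma run_frame:
  assumes "ops_wf n C" "is_pauli n E" "v \<in> carrier_vec (dimq n)" "length os = length (meas_list C)"
  shows "run n C (bxor os (flips n C E)) (E *\<^sub>v v) = fframe n C E *\<^sub>v run n C os v"
  using assms
proof (induction n C E arbitrary: os v rule: flips.induct)
  case (1 n E) then show ?case by simp
next
  case (2 n Q U l C E)
  let ?E' = "U * E * mat_adjoint U"
  have Ucl: "is_clifford n U" using "2.prems" by simp
  have cU: "sqm n U" "sqm n (mat_adjoint U)" using Ucl by (auto simp: clifford_carrier clifford_adj_carrier)
  have eU: "mat_adjoint U * U = 1\<^sub>m (dimq n)" using Ucl clifford_unit by auto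
  have cE: "sqm n E" using "2.prems"(2) by (rule is_pauli_carrier)
  have E': "is_pauli n ?E'" using Ucl "2.prems"(2) unfolding is_clifford_def by blast
  have cE'': "sqm n ?E'" using E' by (rule is_pauli_carrier)
  have "?E' *\<^sub>v (U *\<^sub>v v) = (?E' * U) *\<^sub>v v" using assoc_mult_mat_vec[OF cE'' cU(1) "2.prems"(3)] by simp
  also have "?E' * U = U * E * (mat_adjoint U * U)" using cU cE by (simp add: assoc3)
  also have "\<dots> = U * E" using cU cE eU by simp
  finally have mv: "?E' *\<^sub>v (U *\<^sub>v v) = U *\<^sub>v (E *\<^sub>v v)" using assoc_mult_mat_vec[OF cU(1) cE "2.prems"(3)] by simp
  have "run n ((Gate Q U, l) # C) (bxor os (flips n ((Gate Q U, l) # C) E)) (E *\<^sub>v v)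
      = run n C (bxor os (flips n C ?E')) (?E' *\<^sub>v (U *\<^sub>v v))" using mv by simp
  also have "\<dots> = fframe n C ?E' *\<^sub>v run n C os (U *\<^sub>v v)"
    by (rule "2.IH") (use "2.prems" E' cU in auto)
  finally show ?case by simp
next
  case (3 n S l C E)
  obtain b os' where os: "os = b # os'" using "3.prems"(4) by (cases os) auto
  have hS: "is_hermitian_pauli n S" using "3.prems"(1) by simp
  then have S: "is_pauli n S" unfolding is_hermitian_pauli_def by simp
  then have cS: "sqm n S" by (rule is_pauli_carrier)
  have cE: "sqm n E" using "3.prems"(2) by (rule is_pauli_carrier)
  have cP: "sqm n (meas_proj n S b)" using cS by (rule meas_proj_carrier)
  have cP': "sqm n (meas_proj n S (b \<noteq> (\<not> cm E S)))" using cS by (rule meas_proj_carrier)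
  have mv: "meas_proj n S (b \<noteq> (\<not> cm E S)) *\<^sub>v (E *\<^sub>v v) = E *\<^sub>v (meas_proj n S b *\<^sub>v v)"
  proof -
    have "meas_proj n S (b \<noteq> (\<not> cm E S)) *\<^sub>v (E *\<^sub>v v) = (meas_proj n S (b \<noteq> (\<not> cm E S)) * E) *\<^sub>v v"
      using assoc_mult_mat_vec[OF cP' cE "3.prems"(3)] by simp
    also have "\<dots> = (E * meas_proj n S b) *\<^sub>v v" using meas_proj_frame[OF "3.prems"(2) S] by simp
    also have "\<dots> = E *\<^sub>v (meas_proj n S b *\<^sub>v v)" using assoc_mult_mat_vec[OF cE cP "3.prems"(3)] by simp
    finally show ?thesis .
  qed
  have "run n ((Meas S, l) # C) (bxor os (flips n ((Meas S, l) # C) E)) (E *\<^sub>v v)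
      = run n C (bxor os' (flips n C E)) (E *\<^sub>v (meas_proj n S b *\<^sub>v v))" using mv os by simp
  also have "\<dots> = fframe n C E *\<^sub>v run n C os' (meas_proj n S b *\<^sub>v v)"
    by (rule "3.IH") (use "3.prems" os cP in auto)
  finally show ?case using os by simp
qed


lemma smult_mat_vec:
  fixes A :: "complex mat"
  assumes A: "A \<in> carrier_mat N N" and v: "v \<in> carrier_vec N"
  shows "(c \<cdot>\<^sub>m A) *\<^sub>v v = c \<cdot>\<^sub>v (A *\<^sub>v v)"
proof (rule eq_vecI)
  fix i assume "i < dim_vec (c \<cdot>\<^sub>v (A *\<^sub>v v))"
  then have i: "i < N" using A by simp
  have "dim_vec (row A i) = dim_vec v" using A v by simp
  then show "((c \<cdot>\<^sub>m A) *\<^sub>v v) $ i = (c \<cdot>\<^sub>v (A *\<^sub>v v)) $ i" using A v i by simp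
qed (use A in simp)

lemma mat_vec_zero: "A \<in> carrier_mat N N \<Longrightarrow> A *\<^sub>v 0\<^sub>v N = (0\<^sub>v N :: complex vec)"
  by (rule eq_vecI) auto

lemma smult_vec_zero_iff: "v \<in> carrier_vec N \<Longrightarrow> (c :: complex) \<noteq> 0 \<Longrightarrow> c \<cdot>\<^sub>v v = 0\<^sub>v N \<Longrightarrow> v = 0\<^sub>v N"
proof -
  assume v: "v \<in> carrier_vec N" and c: "c \<noteq> 0" and z: "c \<cdot>\<^sub>v v = 0\<^sub>v N"
  have "(1 / c) \<cdot>\<^sub>v (c \<cdot>\<^sub>v v) = v" using c by (simp add: smult_smult_assoc)
  moreover have "(1 / c) \<cdot>\<^sub>v (0\<^sub>v N) = (0\<^sub>v N :: complex vec)" by (rule eq_vecI) auto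
  ultimately show ?thesis using z by simp
qed

lemma pauli_vec_nonzero:
  assumes F: "is_pauli n F" and r: "r \<in> carrier_vec (dimq n)" "r \<noteq> 0\<^sub>v (dimq n)"
  shows "F *\<^sub>v r \<noteq> 0\<^sub>v (dimq n)"
proof
  assume z: "F *\<^sub>v r = 0\<^sub>v (dimq n)"
  obtain k where k: "F * F = (\<i> ^ k) \<cdot>\<^sub>m 1\<^sub>m (dimq n)" using pauli_sq[OF F] by blast
  have cF: "sqm n F" using F by (rule is_pauli_carrier)
  have "(F * F) *\<^sub>v r = F *\<^sub>v (F *\<^sub>v r)" using assoc_mult_mat_vec[OF cF cF r(1)] .
  also have "\<dots> = 0\<^sub>v (dimq n)" unfolding z using cF by (rule mat_vec_zero)
  finally have "(\<i> ^ k) \<cdot>\<^sub>v r = 0\<^sub>v (dimq n)" unfolding k using r(1)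
    by (simp add: smult_mat_vec[where N="dimq n"])
  then show False using smult_vec_zero_iff[OF r(1), of "\<i> ^ k"] r(2) by simp
qed

lemma cnorm_smult: "w \<in> carrier_vec N \<Longrightarrow> (c \<cdot>\<^sub>v w) \<bullet>c (c \<cdot>\<^sub>v w) = c * cnj c * (w \<bullet>c w)"
  by (simp add: conjugate_smult_vec)

lemma normalize_vec:
  assumes w: "w \<in> carrier_vec N" "w \<noteq> 0\<^sub>v N"
  shows "\<exists>c::complex. c \<noteq> 0 \<and> (c \<cdot>\<^sub>v w) \<bullet>c (c \<cdot>\<^sub>v w) = 1"
proof -
  have pos: "w \<bullet>c w > 0" using w by simp
  define t where "t = Re (w \<bullet>c w)"
  have t: "t > 0" "w \<bullet>c w = complex_of_real t" using pos unfolding t_def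
    by (auto simp: less_complex_def complex_eq_iff)
  define c where "c = complex_of_real (1 / sqrt t)"
  have "c * cnj c * (w \<bullet>c w) = complex_of_real ((1 / sqrt t) * (1 / sqrt t) * t)"
    unfolding c_def t(2) complex_cnj_complex_of_real of_real_mult[symmetric] ..
  also have "(1 / sqrt t) * (1 / sqrt t) * t = 1"
  proof -
    have q: "sqrt t * sqrt t = t" using t(1) by simp
    have "(1 / sqrt t) * (1 / sqrt t) * t = t / (sqrt t * sqrt t)" by simp
    then show ?thesis unfolding q using t(1) by simp
  qed
  finally have "c * cnj c * (w \<bullet>c w) = 1" by simp
  moreover have "c \<noteq> 0" unfolding c_def using t(1) by simp
  ultimately show ?thesis using cnorm_smult[OF w(1), of c] by metis
qed

lemma bxor_false: "bxor (replicate (length f) False) f = f"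
  unfolding bxor_def by (induction f) auto

lemma flips_in_code:
  assumes C: "clifford_circuit n C" and L: "linear_code (num_meas C) (outcome_code n C)"
    and X: "is_pauli n X"
  shows "flips n C X \<in> outcome_code n C"
proof -
  let ?m = "num_meas C"
  let ?f = "flips n C X"
  have wf: "ops_wf n C" using C by (rule cc_wf)
  have lf: "length ?f = ?m" unfolding num_meas_def by (rule length_flips)
  have "replicate ?m False \<in> outcome_code n C" using L unfolding linear_code_def by blast
  then obtain \<psi> where psi: "\<psi> \<in> carrier_vec (dimq n)" "\<psi> \<bullet>c \<psi> = 1"
    and nz: "run n C (replicate ?m False) \<psi> \<bullet>c run n C (replicate ?m False) \<psi> \<noteq> 0"
    unfolding outcome_code_def by blast
  define r where "r = run n C (replicate ?m False) \<psi>"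
  have r: "r \<in> carrier_vec (dimq n)" unfolding r_def using wf psi(1) by (rule run_carrier)
  have rnz: "r \<noteq> 0\<^sub>v (dimq n)" using nz r unfolding r_def[symmetric] by auto
  have psinz: "\<psi> \<noteq> 0\<^sub>v (dimq n)" using psi by auto
  define w where "w = X *\<^sub>v \<psi>"
  have cX: "sqm n X" using X by (rule is_pauli_carrier)
  have w: "w \<in> carrier_vec (dimq n)" unfolding w_def using cX psi(1) by simp
  have wnz: "w \<noteq> 0\<^sub>v (dimq n)" unfolding w_def by (rule pauli_vec_nonzero[OF X psi(1) psinz])
  have "run n C (bxor (replicate ?m False) ?f) w = fframe n C X *\<^sub>v r"
    unfolding w_def r_def by (rule run_frame[OF wf X psi(1)]) (simp add: num_meas_def)
  then have rf: "run n C ?f w = fframe n C X *\<^sub>v r" using bxor_false[of ?f] lf by simp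
  have Fp: "is_pauli n (fframe n C X)" using wf X by (rule fframe_pauli)
  have s: "run n C ?f w \<noteq> 0\<^sub>v (dimq n)" unfolding rf by (rule pauli_vec_nonzero[OF Fp r rnz])
  have sc: "run n C ?f w \<in> carrier_vec (dimq n)" using wf w by (rule run_carrier)
  obtain c where c: "c \<noteq> 0" "(c \<cdot>\<^sub>v w) \<bullet>c (c \<cdot>\<^sub>v w) = 1" using normalize_vec[OF w wnz] by blast
  have "run n C ?f (c \<cdot>\<^sub>v w) = c \<cdot>\<^sub>v run n C ?f w" using wf w by (rule run_smult)
  moreover have "(c \<cdot>\<^sub>v run n C ?f w) \<bullet>c (c \<cdot>\<^sub>v run n C ?f w) \<noteq> 0"
  proof -
    have "run n C ?f w \<bullet>c run n C ?f w \<noteq> 0" using s sc by simp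
    moreover have "c * cnj c \<noteq> 0" using c(1) by simp
    ultimately show ?thesis unfolding cnorm_smult[OF sc] by simp
  qed
  ultimately have A2: "run n C ?f (c \<cdot>\<^sub>v w) \<bullet>c run n C ?f (c \<cdot>\<^sub>v w) \<noteq> 0" by simp
  have cw: "c \<cdot>\<^sub>v w \<in> carrier_vec (dimq n)" using w by simp
  show ?thesis unfolding outcome_code_def using lf c(2) A2 cw by blast
qed

lemma sign_prod_card:
  "(\<Prod>j<(m::nat). if P j then -1 else (1::int)) = (-1) ^ card {j. j < m \<and> P j}"
proof -
  have "(\<Prod>j<m. if P j then -1 else (1::int)) =
     (\<Prod>j\<in>{..<m} \<inter> {j. P j}. -1) * (\<Prod>j\<in>{..<m} \<inter> - {j. P j}. 1)"
    by (rule prod.If_cases) simp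
  also have "\<dots> = (-1) ^ card ({..<m} \<inter> {j. P j})" by simp
  also have "{..<m} \<inter> {j. P j} = {j. j < m \<and> P j}" by auto
  finally show ?thesis .
qed

lemma main_B:
  assumes C: "clifford_circuit n C" and L: "linear_code (num_meas C) (outcome_code n C)"
    and u: "u \<in> dual_code (num_meas C) (outcome_code n C)" and X: "is_pauli n X"
  shows "(\<Prod>j<num_meas C. if u ! j \<and> flips n C X ! j then -1 else (1::int)) = 1"
proof -
  have f: "flips n C X \<in> outcome_code n C" using C L X by (rule flips_in_code)
  have nb: "\<not> bdot u (flips n C X)" and lu: "length u = num_meas C" using u f unfolding dual_code_def by auto
  have lf: "length (flips n C X) = num_meas C" unfolding num_meas_def by (rule length_flips)
  have "{j. j < length u \<and> j < length (flips n C X) \<and> u ! j \<and> flips n C X ! j} =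
        {j. j < num_meas C \<and> (u ! j \<and> flips n C X ! j)}" using lu lf by auto
  then have "even (card {j. j < num_meas C \<and> (u ! j \<and> flips n C X ! j)})" using nb unfolding bdot_def by simp
  then show ?thesis unfolding sign_prod_card by simp
qed


definition Sp :: "nat \<Rightarrow> circuit \<Rightarrow> bool list \<Rightarrow> nat \<Rightarrow> complex mat" where
  "Sp n C u j = (if u ! j then fst (meas_list C ! j) else 1\<^sub>m (dimq n))"

definition lvl :: "circuit \<Rightarrow> nat \<Rightarrow> nat" where
  "lvl C j = snd (meas_list C ! j)"

definition gsg :: "nat \<Rightarrow> circuit \<Rightarrow> bool list \<Rightarrow> complex mat \<Rightarrow> nat \<Rightarrow> int" where
  "gsg n C u X j = sg (cj (Wu n C (lvl C j - 1)) X) (Sp n C u j)"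

lemma listcomp_filter: "[f j. j \<leftarrow> xs, P j] = map f (filter P xs)"
  by (induction xs) auto

lemma mprod_Cons: "mprod n (A # As) = A * mprod n As"
  unfolding mprod_def by simp

lemma mprod_pauli: "(\<forall>A\<in>set As. is_pauli n A) \<Longrightarrow> is_pauli n (mprod n As)"
  by (induction As) (auto simp: mprod_Cons is_pauli_one is_pauli_mult, simp add: mprod_def is_pauli_one)

lemma sg_one: "is_pauli n E \<Longrightarrow> sg E (1\<^sub>m (dimq n)) = 1"
  unfolding sg_def using is_pauli_carrier[of n E] by simp

lemma sg_sym: "sg A B = sg B A"
  unfolding sg_def by auto

lemma sg_mprod: "is_pauli n E \<Longrightarrow> (\<forall>A\<in>set As. is_pauli n A) \<Longrightarrow> sg E (mprod n As) = prod_list (map (sg E) As)"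
proof (induction As)
  case Nil then show ?case by (simp add: mprod_def sg_one)
next
  case (Cons A As)
  have "is_pauli n (mprod n As)" using Cons.prems by (intro mprod_pauli) auto
  then have "sg E (A * mprod n As) = sg E A * sg E (mprod n As)"
    using Cons.prems by (intro sg_mult) auto
  then show ?case using Cons by (simp add: mprod_Cons)
qed

lemma lvl_pos: "clifford_circuit n C \<Longrightarrow> j < length (meas_list C) \<Longrightarrow> 1 \<le> lvl C j"
  unfolding lvl_def using meas_in_set cc_level by fastforce

lemma lvl_depth: "j < length (meas_list C) \<Longrightarrow> lvl C j \<le> depth C"
proof -
  assume j: "j < length (meas_list C)"
  have "lvl C j \<in> set (map snd C)" unfolding lvl_def using meas_in_set[OF j] by force
  then show ?thesis unfolding depth_def by simp
qed

lemma Sp_pauli: "clifford_circuit n C \<Longrightarrow> j < length (meas_list C) \<Longrightarrow> is_pauli n (Sp n C u j)"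
proof -
  assume C: "clifford_circuit n C" and j: "j < length (meas_list C)"
  have "is_hermitian_pauli n (fst (meas_list C ! j))"
    using meas_in_set[OF j] C unfolding clifford_circuit_def by fastforce
  then show ?thesis unfolding Sp_def is_hermitian_pauli_def by (simp add: is_pauli_one)
qed

lemma fault_sg:
  assumes C: "clifford_circuit n C" and E: "is_pauli n E"
  shows "sg E (mprod n [Sp n C u j. j \<leftarrow> [0..<length (meas_list C)], P j]) =
     (\<Prod>j\<in>{j. j < length (meas_list C) \<and> P j}. sg E (Sp n C u j))"
    and "is_pauli n (mprod n [Sp n C u j. j \<leftarrow> [0..<length (meas_list C)], P j])"
proof -
  let ?xs = "filter P [0..<length (meas_list C)]"
  have all: "\<forall>A\<in>set (map (Sp n C u) ?xs). is_pauli n A" using Sp_pauli[OF C] by auto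
  show "is_pauli n (mprod n [Sp n C u j. j \<leftarrow> [0..<length (meas_list C)], P j])"
    unfolding listcomp_filter using all by (rule mprod_pauli)
  have "sg E (mprod n [Sp n C u j. j \<leftarrow> [0..<length (meas_list C)], P j]) = prod_list (map (sg E \<circ> Sp n C u) ?xs)"
    unfolding listcomp_filter sg_mprod[OF E all] by simp
  also have "\<dots> = prod (sg E \<circ> Sp n C u) (set ?xs)" by (rule prod.distinct_set_conv_list[symmetric]) simp
  also have "set ?xs = {j. j < length (meas_list C) \<and> P j}" by auto
  finally show "sg E (mprod n [Sp n C u j. j \<leftarrow> [0..<length (meas_list C)], P j]) =
     (\<Prod>j\<in>{j. j < length (meas_list C) \<and> P j}. sg E (Sp n C u j))" by simp
qed

lemma fault_after_eq: "fault_after n C u l = mprod n [Sp n C u j. j \<leftarrow> [0..<length (meas_list C)], lvl C j = l]"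
  unfolding fault_after_def Sp_def lvl_def Let_def ..

lemma fault_before_eq: "fault_before n C u l = mprod n [Sp n C u j. j \<leftarrow> [0..<length (meas_list C)], lvl C j = Suc l]"
  unfolding fault_before_def Sp_def lvl_def Let_def ..


lemma cj_pauli: "is_clifford n W \<Longrightarrow> is_pauli n X \<Longrightarrow> is_pauli n (cj W X)"
  unfolding cj_def is_clifford_def by blast

lemma cj_mult:
  assumes U: "is_clifford n U" and W: "is_clifford n W" and X: "sqm n X"
  shows "cj (U * W) X = U * cj W X * mat_adjoint U"
proof -
  have c: "sqm n U" "sqm n W" "sqm n (mat_adjoint U)" "sqm n (mat_adjoint W)"
    using U W by (auto simp: clifford_carrier clifford_adj_carrier)
  show ?thesis unfolding cj_def using c X by (simp add: adj_mult assoc3)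
qed

lemma cj_back:
  assumes U: "is_clifford n U" and Y: "sqm n Y"
  shows "mat_adjoint U * (U * Y * mat_adjoint U) * U = Y"
proof -
  have c: "sqm n U" "sqm n (mat_adjoint U)" using U by (auto simp: clifford_carrier clifford_adj_carrier)
  have e: "mat_adjoint U * U = 1\<^sub>m (dimq n)" using U clifford_unit by auto
  have "mat_adjoint U * (U * Y * mat_adjoint U) * U = (mat_adjoint U * U) * Y * (mat_adjoint U * U)"
    using c Y by (simp add: assoc3)
  then show ?thesis using e Y by simp
qed

lemma cj_fwd:
  assumes U: "is_clifford n U" and Y: "sqm n Y"
  shows "U * (mat_adjoint U * Y * U) * mat_adjoint U = Y"
proof -
  have c: "sqm n U" "sqm n (mat_adjoint U)" using U by (auto simp: clifford_carrier clifford_adj_carrier)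
  have e: "U * mat_adjoint U = 1\<^sub>m (dimq n)" using U clifford_unit by auto
  have "U * (mat_adjoint U * Y * U) * mat_adjoint U = (U * mat_adjoint U) * Y * (U * mat_adjoint U)"
    using c Y by (simp add: assoc3)
  then show ?thesis using e Y by simp
qed

lemma sg_conj1:
  assumes U: "is_clifford n U" and E: "sqm n E" and A: "sqm n A"
  shows "sg E (U * A * mat_adjoint U) = sg (mat_adjoint U * E * U) A"
  using U E A by (intro sg_conj_gen[where N="dimq n"])
    (auto simp: clifford_carrier clifford_adj_carrier clifford_unit)

lemma sg_conj2:
  assumes U: "is_clifford n U" and E: "sqm n E" and A: "sqm n A"
  shows "sg E (mat_adjoint U * A * U) = sg (U * E * mat_adjoint U) A"
  using U E A by (intro sg_conj_gen[where N="dimq n"])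
    (auto simp: clifford_carrier clifford_adj_carrier clifford_unit)

lemma sg_conj_first:
  assumes U: "is_clifford n U" and Y: "sqm n Y" and S: "sqm n S" and US: "U * S = S * U"
  shows "sg (U * Y * mat_adjoint U) S = sg Y S"
proof -
  have c: "sqm n U" "sqm n (mat_adjoint U)" using U by (auto simp: clifford_carrier clifford_adj_carrier)
  have e: "mat_adjoint U * U = 1\<^sub>m (dimq n)" using U clifford_unit by auto
  have SS: "mat_adjoint U * S * U = S"
  proof -
    have "mat_adjoint U * S * U = mat_adjoint U * (U * S)" using c S US by (simp add: assoc3)
    also have "\<dots> = (mat_adjoint U * U) * S" using c S by (simp add: assoc3)
    finally show ?thesis using e S by simp
  qed
  have "sg (U * Y * mat_adjoint U) S = sg S (U * Y * mat_adjoint U)" by (rule sg_sym)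
  also have "\<dots> = sg (mat_adjoint U * S * U) Y" using U S Y by (rule sg_conj1)
  also have "\<dots> = sg Y S" unfolding SS by (rule sg_sym)
  finally show ?thesis .
qed

lemma U_Sp_comm:
  assumes C: "clifford_circuit n C" and j: "j < length (meas_list C)"
  shows "level_unitary n C (lvl C j) * Sp n C u j = Sp n C u j * level_unitary n C (lvl C j)"
proof -
  have wf: "ops_wf n C" using C by (rule cc_wf)
  have cL: "sqm n (level_unitary n C (lvl C j))" using wf by (simp add: clifford_carrier lu_clifford)
  have cS: "sqm n (Sp n C u j)" using Sp_pauli[OF C j] by (rule is_pauli_carrier)
  show ?thesis
  proof (cases "u ! j")
    case True
    have inC: "(Meas (fst (meas_list C ! j)), lvl C j) \<in> set C" unfolding lvl_def using j by (rule meas_in_set)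
    have "level_unitary n C (lvl C j) * fst (meas_list C ! j) = fst (meas_list C ! j) * level_unitary n C (lvl C j)"
    proof (rule lu_comm[OF wf])
      show "sqm n (fst (meas_list C ! j))" using cS True unfolding Sp_def by simp
      fix Q U assume "(Gate Q U, lvl C j) \<in> set C"
      then show "U * fst (meas_list C ! j) = fst (meas_list C ! j) * U" using cc_comm[OF C _ inC] by blast
    qed
    then show ?thesis using True unfolding Sp_def by simp
  next
    case False
    then show ?thesis unfolding Sp_def using cL by simp
  qed
qed

lemma cum_pauli: "clifford_circuit n C \<Longrightarrow> is_pauli n (cumulant n C (fault_after n C u) l)"
proof (induction l)
  case 0 then show ?case unfolding fault_after_eq using fault_sg(2)[OF "0.prems" is_pauli_one] by simp
next
  case (Suc l)
  have wf: "ops_wf n C" using Suc.prems by (rule cc_wf)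
  have U: "is_clifford n (level_unitary n C (Suc l))" using wf by (rule lu_clifford)
  have "is_pauli n (level_unitary n C (Suc l) * cumulant n C (fault_after n C u) l * mat_adjoint (level_unitary n C (Suc l)))"
    using U Suc unfolding is_clifford_def by blast
  moreover have "is_pauli n (fault_after n C u (Suc l))" unfolding fault_after_eq using fault_sg(2)[OF Suc.prems is_pauli_one] .
  ultimately show ?case by (simp add: is_pauli_mult)
qed

lemma back_pauli: "clifford_circuit n C \<Longrightarrow> is_pauli n (back_cumulant n C (fault_before n C u) l)"
proof (induction "depth C - l" arbitrary: l)
  case 0
  then have "depth C \<le> l" by simp
  then have "back_cumulant n C (fault_before n C u) l = fault_before n C u l" by (subst back_cumulant.simps) simp
  then show ?case unfolding fault_before_eq using fault_sg(2)[OF "0.prems" is_pauli_one] by simp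
next
  case (Suc d)
  then have dl: "\<not> depth C \<le> l" by simp
  have wf: "ops_wf n C" using Suc.prems by (rule cc_wf)
  have U: "is_clifford n (level_unitary n C (Suc l))" using wf by (rule lu_clifford)
  have ih: "is_pauli n (back_cumulant n C (fault_before n C u) (Suc l))"
    using Suc.hyps(1)[of "Suc l"] Suc.hyps(2) Suc.prems by simp
  have "is_pauli n (mat_adjoint (level_unitary n C (Suc l)) * back_cumulant n C (fault_before n C u) (Suc l) * level_unitary n C (Suc l))"
    using clifford_inv_pauli[OF U ih] .
  moreover have "is_pauli n (fault_before n C u l)" unfolding fault_before_eq using fault_sg(2)[OF Suc.prems is_pauli_one] .
  moreover have "back_cumulant n C (fault_before n C u) l = fault_before n C u l *
      (mat_adjoint (level_unitary n C (Suc l)) * back_cumulant n C (fault_before n C u) (Suc l) * level_unitary n C (Suc l))"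
    using dl by (subst back_cumulant.simps) simp
  ultimately show ?case by (simp add: is_pauli_mult)
qed


lemma Wu_cliff: "clifford_circuit n C \<Longrightarrow> is_clifford n (Wu n C k)"
  using Wu_clifford cc_wf by blast

lemma prod_split:
  assumes "A = B \<union> D" "B \<inter> D = {}" "finite A"
  shows "prod f A = prod f B * (prod f D :: int)"
  using assms by (simp add: prod.union_disjoint)

lemma A1:
  assumes C: "clifford_circuit n C" and X: "is_pauli n X"
  shows "sg (cj (Wu n C l) X) (cumulant n C (fault_after n C u) l) =
    (\<Prod>j\<in>{j. j < length (meas_list C) \<and> lvl C j \<le> l}. gsg n C u X j)"
proof (induction l)
  case 0
  have Y: "is_pauli n (cj (Wu n C 0) X)" using Wu_cliff[OF C] X by (rule cj_pauli)
  have e: "{j. j < length (meas_list C) \<and> lvl C j = 0} = {}" "{j. j < length (meas_list C) \<and> lvl C j \<le> 0} = {}"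
    using lvl_pos[OF C] by fastforce+
  show ?case unfolding cumulant.simps fault_after_eq fault_sg(1)[OF C Y] e by simp
next
  case (Suc l)
  let ?m = "length (meas_list C)"
  let ?U = "level_unitary n C (Suc l)"
  let ?Yp = "cj (Wu n C l) X"
  let ?Y = "cj (Wu n C (Suc l)) X"
  let ?F = "fault_after n C u (Suc l)"
  let ?R = "?U * cumulant n C (fault_after n C u) l * mat_adjoint ?U"
  have wf: "ops_wf n C" using C by (rule cc_wf)
  have U: "is_clifford n ?U" using wf by (rule lu_clifford)
  have cX: "sqm n X" using X by (rule is_pauli_carrier)
  have Y0: "is_pauli n ?Yp" using Wu_cliff[OF C] X by (rule cj_pauli)
  have Y: "is_pauli n ?Y" using Wu_cliff[OF C] X by (rule cj_pauli)
  have cY0: "sqm n ?Yp" using Y0 by (rule is_pauli_carrier)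
  have WS: "Wu n C (Suc l) = ?U * Wu n C l" by simp
  have Yeq: "?Y = ?U * ?Yp * mat_adjoint ?U" unfolding WS by (rule cj_mult[OF U Wu_cliff[OF C] cX])
  have cum: "is_pauli n (cumulant n C (fault_after n C u) l)" using C by (rule cum_pauli)
  have R: "is_pauli n ?R" using U cum unfolding is_clifford_def by blast
  have F: "is_pauli n ?F" unfolding fault_after_eq using fault_sg(2)[OF C is_pauli_one] .
  have "sg ?Y (cumulant n C (fault_after n C u) (Suc l)) = sg ?Y ?F * sg ?Y ?R"
    using sg_mult[OF Y F R] by simp
  moreover have "sg ?Y ?R = sg ?Yp (cumulant n C (fault_after n C u) l)"
  proof -
    have "sg ?Y ?R = sg (mat_adjoint ?U * ?Y * ?U) (cumulant n C (fault_after n C u) l)"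
      using U is_pauli_carrier[OF Y] is_pauli_carrier[OF cum] by (rule sg_conj1)
    also have "mat_adjoint ?U * ?Y * ?U = ?Yp" unfolding Yeq using U cY0 by (rule cj_back)
    finally show ?thesis .
  qed
  moreover have "sg ?Y ?F = (\<Prod>j\<in>{j. j < ?m \<and> lvl C j = Suc l}. gsg n C u X j)"
  proof -
    have "sg ?Y ?F = (\<Prod>j\<in>{j. j < ?m \<and> lvl C j = Suc l}. sg ?Y (Sp n C u j))"
      unfolding fault_after_eq by (rule fault_sg(1)[OF C Y])
    also have "\<dots> = (\<Prod>j\<in>{j. j < ?m \<and> lvl C j = Suc l}. gsg n C u X j)"
    proof (rule prod.cong[OF refl])
      fix j assume j: "j \<in> {j. j < ?m \<and> lvl C j = Suc l}"
      have cS: "sqm n (Sp n C u j)" using Sp_pauli[OF C] j is_pauli_carrier by auto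
      have US: "?U * Sp n C u j = Sp n C u j * ?U" using U_Sp_comm[OF C, of j u] j by simp
      have "sg ?Y (Sp n C u j) = sg ?Yp (Sp n C u j)" unfolding Yeq using U cY0 cS US by (rule sg_conj_first)
      then show "sg ?Y (Sp n C u j) = gsg n C u X j" unfolding gsg_def using j by simp
    qed
    finally show ?thesis .
  qed
  moreover have "(\<Prod>j\<in>{j. j < ?m \<and> lvl C j \<le> Suc l}. gsg n C u X j) =
      (\<Prod>j\<in>{j. j < ?m \<and> lvl C j = Suc l}. gsg n C u X j) * (\<Prod>j\<in>{j. j < ?m \<and> lvl C j \<le> l}. gsg n C u X j)"
    by (rule prod_split) auto
  ultimately show ?case using Suc.IH by simp
qed

lemma A2:
  assumes C: "clifford_circuit n C" and X: "is_pauli n X"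
  shows "sg (cj (Wu n C l) X) (back_cumulant n C (fault_before n C u) l) =
    (\<Prod>j\<in>{j. j < length (meas_list C) \<and> l < lvl C j}. gsg n C u X j)"
proof (induction "depth C - l" arbitrary: l)
  case 0
  then have dl: "depth C \<le> l" by simp
  let ?Y = "cj (Wu n C l) X"
  have Y: "is_pauli n ?Y" using Wu_cliff[OF C] X by (rule cj_pauli)
  have b: "back_cumulant n C (fault_before n C u) l = fault_before n C u l" using dl by (subst back_cumulant.simps) simp
  have e: "{j. j < length (meas_list C) \<and> lvl C j = Suc l} = {}" "{j. j < length (meas_list C) \<and> l < lvl C j} = {}"
    using lvl_depth[of _ C] dl by fastforce+
  show ?case unfolding b unfolding fault_before_eq fault_sg(1)[OF C Y] e by simp
next
  case (Suc d)
  then have dl: "\<not> depth C \<le> l" by simp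
  let ?m = "length (meas_list C)"
  let ?U = "level_unitary n C (Suc l)"
  let ?Y = "cj (Wu n C l) X"
  let ?Yn = "cj (Wu n C (Suc l)) X"
  let ?F = "fault_before n C u l"
  let ?B = "back_cumulant n C (fault_before n C u) (Suc l)"
  let ?R = "mat_adjoint ?U * ?B * ?U"
  have wf: "ops_wf n C" using C by (rule cc_wf)
  have U: "is_clifford n ?U" using wf by (rule lu_clifford)
  have cX: "sqm n X" using X by (rule is_pauli_carrier)
  have Y: "is_pauli n ?Y" using Wu_cliff[OF C] X by (rule cj_pauli)
  have cY: "sqm n ?Y" using Y by (rule is_pauli_carrier)
  have WS: "Wu n C (Suc l) = ?U * Wu n C l" by simp
  have Yeq: "?Yn = ?U * ?Y * mat_adjoint ?U" unfolding WS by (rule cj_mult[OF U Wu_cliff[OF C] cX])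
  have Bp: "is_pauli n ?B" using C by (rule back_pauli)
  have R: "is_pauli n ?R" using clifford_inv_pauli[OF U Bp] .
  have F: "is_pauli n ?F" unfolding fault_before_eq using fault_sg(2)[OF C is_pauli_one] .
  have b: "back_cumulant n C (fault_before n C u) l = ?F * ?R" using dl by (subst back_cumulant.simps) simp
  have ih: "sg ?Yn ?B = (\<Prod>j\<in>{j. j < ?m \<and> Suc l < lvl C j}. gsg n C u X j)"
    using Suc.hyps(1)[of "Suc l"] Suc.hyps(2) by simp
  have "sg ?Y (back_cumulant n C (fault_before n C u) l) = sg ?Y ?F * sg ?Y ?R"
    unfolding b using sg_mult[OF Y F R] by simp
  moreover have "sg ?Y ?R = sg ?Yn ?B"
    unfolding Yeq using U cY is_pauli_carrier[OF Bp] by (rule sg_conj2)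
  moreover have "sg ?Y ?F = (\<Prod>j\<in>{j. j < ?m \<and> lvl C j = Suc l}. gsg n C u X j)"
  proof -
    have "sg ?Y ?F = (\<Prod>j\<in>{j. j < ?m \<and> lvl C j = Suc l}. sg ?Y (Sp n C u j))"
      unfolding fault_before_eq by (rule fault_sg(1)[OF C Y])
    also have "\<dots> = (\<Prod>j\<in>{j. j < ?m \<and> lvl C j = Suc l}. gsg n C u X j)"
      by (rule prod.cong[OF refl]) (simp add: gsg_def)
    finally show ?thesis .
  qed
  moreover have "(\<Prod>j\<in>{j. j < ?m \<and> l < lvl C j}. gsg n C u X j) =
      (\<Prod>j\<in>{j. j < ?m \<and> lvl C j = Suc l}. gsg n C u X j) * (\<Prod>j\<in>{j. j < ?m \<and> Suc l < lvl C j}. gsg n C u X j)"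
    by (rule prod_split) auto
  ultimately show ?case using ih by simp
qed

theorem mainTheorem16:
  fixes n :: nat and C :: circuit and u :: "bool list"
  assumes "clifford_circuit n C"
    and "linear_code (num_meas C) (outcome_code n C)"
    and "u \<in> dual_code (num_meas C) (outcome_code n C)"
  shows "\<forall>l \<le> depth C. eq_mod_phase (back_cumulant n C (fault_before n C u) l)
                                    (cumulant n C (fault_after n C u) l)"
proof (intro allI impI)
  fix l assume l: "l \<le> depth C"
  note C = assms(1)
  let ?m = "length (meas_list C)"
  show "eq_mod_phase (back_cumulant n C (fault_before n C u) l) (cumulant n C (fault_after n C u) l)"
  proof (rule eq_mod_phase_crit[where n=n])
    show "is_pauli n (back_cumulant n C (fault_before n C u) l)" using C by (rule back_pauli)
    show "is_pauli n (cumulant n C (fault_after n C u) l)" using C by (rule cum_pauli)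
    fix E assume E: "is_pauli n E"
    let ?W = "Wu n C l"
    let ?X = "mat_adjoint ?W * E * ?W"
    have Wc: "is_clifford n ?W" using C by (rule Wu_cliff)
    have X: "is_pauli n ?X" using Wc E by (rule clifford_inv_pauli)
    have EX: "cj ?W ?X = E" unfolding cj_def using Wc is_pauli_carrier[OF E] by (rule cj_fwd)
    have g: "gsg n C u ?X j = (if u ! j \<and> flips n C ?X ! j then -1 else 1)" if j: "j < ?m" for j
    proof (cases "u ! j")
      case True
      have "flips n C ?X ! j \<longleftrightarrow> \<not> cm (cj (Wu n C (lvl C j - 1)) ?X) (fst (meas_list C ! j))"
        unfolding lvl_def using C X j by (rule flips_W)
      then show ?thesis using True unfolding gsg_def Sp_def sg_def cm_def by simp
    next
      case False
      have "is_pauli n (cj (Wu n C (lvl C j - 1)) ?X)" using Wu_cliff[OF C] X by (rule cj_pauli)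
      then show ?thesis using False unfolding gsg_def Sp_def by (simp add: sg_one)
    qed
    have prod1: "(\<Prod>j\<in>{j. j < ?m}. gsg n C u ?X j) = 1"
    proof -
      have "(\<Prod>j\<in>{j. j < ?m}. gsg n C u ?X j) = (\<Prod>j<num_meas C. if u ! j \<and> flips n C ?X ! j then -1 else (1::int))"
        unfolding num_meas_def by (rule prod.cong) (auto simp: g)
      also have "\<dots> = 1" using assms X by (rule main_B)
      finally show ?thesis .
    qed
    have "sg E (back_cumulant n C (fault_before n C u) l) * sg E (cumulant n C (fault_after n C u) l) =
        (\<Prod>j\<in>{j. j < ?m \<and> l < lvl C j}. gsg n C u ?X j) * (\<Prod>j\<in>{j. j < ?m \<and> lvl C j \<le> l}. gsg n C u ?X j)"
      using A1[OF C X, of l u] A2[OF C X, of l u] unfolding EX by simp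
    also have "\<dots> = (\<Prod>j\<in>{j. j < ?m}. gsg n C u ?X j)"
      by (rule prod_split[symmetric]) auto
    finally have "sg E (back_cumulant n C (fault_before n C u) l) * sg E (cumulant n C (fault_after n C u) l) = 1"
      using prod1 by simp
    then show "sg E (back_cumulant n C (fault_before n C u) l) = sg E (cumulant n C (fault_after n C u) l)"
      using sg_pm[of E "back_cumulant n C (fault_before n C u) l"] sg_pm[of E "cumulant n C (fault_after n C u) l"]
      by auto
  qed
qed


end
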